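(* Let $\Gamma\in\mathcal S$ have $n$ vertices and let $\varphi$ be an embedding into $\mathbb Z^n$ such that exactly one index is of type (9), exactly one is of type (5), exactly one is of type (2), and every other index is of type (4) or (7). Then $\Gamma\in\mathcal C$.
   Context: A plumbing tree is a finite tree $\Gamma$ each of whose vertices $v$ carries an integer decoration $d(v)$. $\Gamma$ is minimal if no vertex has decoration $-1$. For $n\ge 1$ let $(\mathbb Z^n,Q_n)$ be the lattice with basis $E_1,\dots,E_n$ and $Q_n(E_i,E_j)=-\delta_{ij}$, and let $K=\sum_{i=1}^n E_i$. A plumbing tree $\Gamma$ on $n$ vertices is a symplectic plumbing tree if there is a map $\varphi$ (an embedding) from its vertex set to $\mathbb Z^n$ such that: for distinct vertices $v_1,v_2$, $Q_n(\varphi(v_1),\varphi(v_2))$ is $1$ if they are adjacent and $0$ otherwise; $Q_n(\varphi(v),\varphi(v))=d(v)$ for every $v$; and $Q_n(\varphi(v),K)+Q_n(\varphi(v),\varphi(v))=-2$ for every $v$. $\mathcal S$ is the set of minimal, connected symplectic plumbing trees. Index types: write $\varphi(v)=\sum_i a_{v,i}E_i$; for an index $i$ consider the multiset of nonzero coefficients $a_{v,i}$ as $v$ ranges over all vertices. Index $i$ is of type (1) if this multiset is $\{1\}$, (2) if $\{-1\}$, (3) if $\{-2\}$, (4) if $\{1,-1\}$, (5) if $\{1,-2\}$, (6) if $\{-1,-1\}$, (7) if $\{1,-1,-1\}$, (9) if $\{1,-1,-1,-1\}$, and (10) if it is empty. If $u$ is a vertex of decoration $-1$, blowing up $u$ means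 adding a new vertex of decoration $-1$ adjacent only to $u$ and decreasing $d(u)$ by $1$; blowing up an edge $uw$ means deleting that edge, adding a new vertex of decoration $-1$ adjacent exactly to $u$ and $w$, and decreasing $d(u)$ and $d(w)$ by $1$. Let $T_c$ be the tree with a central vertex of decoration $-1$ and three leaves of decorations $-2,-6,-3$. $\mathcal C$ is the set of trees obtained from $T_c$ by a finite (possibly empty) sequence of blow-ups, each of which blows up the current unique $(-1)$-vertex or an edge emanating from it, followed by changing the decoration of the unique $(-1)$-vertex to $-2$. *)

theory Defs
  imports Main "HOL-Library.Multiset"
begin

definition plumbing_tree :: "'v set \<Rightarrow> ('v \<Rightarrow> 'v \<Rightarrow> bool) \<Rightarrow> bool" where
  "plumbing_tree V E \<longleftrightarrow>
     finite V \<and> V \<noteq> {} \<and>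
     (\<forall>a b. E a b \<longrightarrow> a \<in> V \<and> b \<in> V) \<and>
     (\<forall>a b. E a b \<longrightarrow> E b a) \<and> (\<forall>a. \<not> E a a) \<and>
     (\<forall>a\<in>V. \<forall>b\<in>V. E\<^sup>*\<^sup>* a b) \<and>
     card {{a, b} | a b. E a b} = card V - 1"

definition minimal_tree :: "'v set \<Rightarrow> ('v \<Rightarrow> int) \<Rightarrow> bool" where
  "minimal_tree V d \<longleftrightarrow> (\<forall>v\<in>V. d v \<noteq> -1)"

text \<open>Lattice (Z^n, Q_n), vectors as functions nat => int, indices i < n.\<close>
definition Qn :: "nat \<Rightarrow> (nat \<Rightarrow> int) \<Rightarrow> (nat \<Rightarrow> int) \<Rightarrow> int" where
  "Qn n x y = - (\<Sum>i<n. x i * y i)"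

definition Kvec :: "nat \<Rightarrow> int" where
  "Kvec = (\<lambda>i. 1)"

definition symplectic_embedding ::
  "'v set \<Rightarrow> ('v \<Rightarrow> 'v \<Rightarrow> bool) \<Rightarrow> ('v \<Rightarrow> int) \<Rightarrow> ('v \<Rightarrow> nat \<Rightarrow> int) \<Rightarrow> bool" where
  "symplectic_embedding V E d \<phi> \<longleftrightarrow>
     (let n = card V in
       (\<forall>v\<in>V. \<forall>i\<ge>n. \<phi> v i = 0) \<and>
       (\<forall>v1\<in>V. \<forall>v2\<in>V. v1 \<noteq> v2 \<longrightarrow>
            Qn n (\<phi> v1) (\<phi> v2) = (if E v1 v2 then 1 else 0)) \<and>
       (\<forall>v\<in>V. Qn n (\<phi> v) (\<phi> v) = d v) \<and>
       (\<forall>v\<in>V. Qn n (\<phi> v) Kvec + Qn n (\<phi> v) (\<phi> v) = -2))"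

definition index_coeffs :: "'v set \<Rightarrow> ('v \<Rightarrow> nat \<Rightarrow> int) \<Rightarrow> nat \<Rightarrow> int multiset" where
  "index_coeffs V \<phi> i = image_mset (\<lambda>v. \<phi> v i) (mset_set {v\<in>V. \<phi> v i \<noteq> 0})"

definition type2 :: "int multiset" where "type2 = {#-1#}"
definition type4 :: "int multiset" where "type4 = {#1, -1#}"
definition type5 :: "int multiset" where "type5 = {#1, -2#}"
definition type7 :: "int multiset" where "type7 = {#1, -1, -1#}"
definition type9 :: "int multiset" where "type9 = {#1, -1, -1, -1#}"

text \<open>Generation of the family C.  Trees are built on vertex set {0..<m};
  the last argument is the current unique (-1)-vertex.\<close>
definition Tc_E :: "nat \<Rightarrow> nat \<Rightarrow> bool" where
  "Tc_E a b \<longleftrightarrow> (a = 0 \<and> b \<in> {1,2,3}) \<or> (b = 0 \<and> a \<in> {1,2,3})"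

definition Tc_d :: "nat \<Rightarrow> int" where
  "Tc_d v = (if v = 0 then -1 else if v = 1 then -2 else if v = 2 then -6
             else if v = 3 then -3 else 0)"

inductive cgen :: "nat \<Rightarrow> (nat \<Rightarrow> nat \<Rightarrow> bool) \<Rightarrow> (nat \<Rightarrow> int) \<Rightarrow> nat \<Rightarrow> bool" where
  base: "cgen 4 Tc_E Tc_d 0"
| blowup_vertex: "cgen m E d u \<Longrightarrow>
     cgen (Suc m) (\<lambda>a b. E a b \<or> {a, b} = {u, m}) (d(u := d u - 1, m := -1)) m"
| blowup_edge: "cgen m E d u \<Longrightarrow> E u x \<Longrightarrow>
     cgen (Suc m) (\<lambda>a b. (E a b \<and> {a, b} \<noteq> {u, x}) \<or> {a, b} = {u, m} \<or> {a, b} = {x, m})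
       (d(u := d u - 1, x := d x - 1, m := -1)) m"

definition in_C :: "'v set \<Rightarrow> ('v \<Rightarrow> 'v \<Rightarrow> bool) \<Rightarrow> ('v \<Rightarrow> int) \<Rightarrow> bool" where
  "in_C V E d \<longleftrightarrow> (\<exists>m E' d' u f. cgen m E' d' u \<and> bij_betw f V {0..<m} \<and>
      (\<forall>a\<in>V. \<forall>b\<in>V. E a b \<longleftrightarrow> E' (f a) (f b)) \<and>
      (\<forall>a\<in>V. d a = (d'(u := -2)) (f a)))"

end

theory Submission
  imports Defs Complex_Main
begin


lemma coeffs_count:
  assumes "finite V" "k \<noteq> 0"
  shows "count (index_coeffs V \<phi> i) k = card {v\<in>V. \<phi> v i = k}"
proof -
  have "count (index_coeffs V \<phi> i) k = (\<Sum>y\<in>(\<lambda>v. \<phi> v i) -` {k} \<inter> {v\<in>V. \<phi> v i \<noteq> 0}. 1)"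
    unfolding index_coeffs_def count_image_mset using assms by (intro sum.cong) auto
  also have "\<dots> = card {v\<in>V. \<phi> v i = k}"
    using assms by (auto intro: arg_cong[where f=card])
  finally show ?thesis .
qed

lemma coeffs_mem:
  assumes "finite V" "v \<in> V" "\<phi> v i \<noteq> 0"
  shows "\<phi> v i \<in># index_coeffs V \<phi> i"
  using assms unfolding index_coeffs_def by auto

definition colinfo :: "'v set \<Rightarrow> ('v \<Rightarrow> nat \<Rightarrow> int) \<Rightarrow> nat \<Rightarrow> nat \<Rightarrow> nat \<Rightarrow> nat \<Rightarrow> bool" where
  "colinfo V \<phi> i n1 nm1 nm2 \<longleftrightarrow> (\<forall>v\<in>V. \<phi> v i \<in> {0,1,-1,-2}) \<and>
     card {v\<in>V. \<phi> v i = 1} = n1 \<and> card {v\<in>V. \<phi> v i = -1} = nm1 \<and> card {v\<in>V. \<phi> v i = -2} = nm2"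

lemma colinfo_gen:
  assumes "finite V" "index_coeffs V \<phi> i = M" "set_mset M \<subseteq> {1,-1,-2}"
  shows "colinfo V \<phi> i (count M 1) (count M (-1)) (count M (-2))"
proof -
  have "\<phi> v i \<in> {0,1,-1,-2}" if "v \<in> V" for v
  proof (cases "\<phi> v i = 0")
    case False
    then have "\<phi> v i \<in># M" using coeffs_mem[OF assms(1) that] assms(2) by auto
    then show ?thesis using assms(3) by auto
  qed simp
  moreover have "card {v\<in>V. \<phi> v i = 1} = count M 1"
    using coeffs_count[OF assms(1), of 1 \<phi> i] assms(2) by simp
  moreover have "card {v\<in>V. \<phi> v i = -1} = count M (-1)"
    using coeffs_count[OF assms(1), of "-1" \<phi> i] assms(2) by simp
  moreover have "card {v\<in>V. \<phi> v i = -2} = count M (-2)"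
    using coeffs_count[OF assms(1), of "-2" \<phi> i] assms(2) by simp
  ultimately show ?thesis unfolding colinfo_def by blast
qed

lemma type_counts:
  "count type9 1 = 1" "count type9 (-1) = 3" "count type9 (-2) = 0" "set_mset type9 \<subseteq> {1,-1,-2}"
  "count type5 1 = 1" "count type5 (-1) = 0" "count type5 (-2) = 1" "set_mset type5 \<subseteq> {1,-1,-2}"
  "count type4 1 = 1" "count type4 (-1) = 1" "count type4 (-2) = 0" "set_mset type4 \<subseteq> {1,-1,-2}"
  "count type7 1 = 1" "count type7 (-1) = 2" "count type7 (-2) = 0" "set_mset type7 \<subseteq> {1,-1,-2}"
  "count type2 1 = 0" "count type2 (-1) = 1" "count type2 (-2) = 0" "set_mset type2 \<subseteq> {1,-1,-2}"
  by (simp_all add: type9_def type5_def type4_def type7_def type2_def)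

lemma colinfo9: "finite V \<Longrightarrow> index_coeffs V \<phi> i = type9 \<Longrightarrow> colinfo V \<phi> i 1 3 0"
  using colinfo_gen[of V \<phi> i type9] type_counts by simp
lemma colinfo5: "finite V \<Longrightarrow> index_coeffs V \<phi> i = type5 \<Longrightarrow> colinfo V \<phi> i 1 0 1"
  using colinfo_gen[of V \<phi> i type5] type_counts by simp
lemma colinfo4: "finite V \<Longrightarrow> index_coeffs V \<phi> i = type4 \<Longrightarrow> colinfo V \<phi> i 1 1 0"
  using colinfo_gen[of V \<phi> i type4] type_counts by simp
lemma colinfo7: "finite V \<Longrightarrow> index_coeffs V \<phi> i = type7 \<Longrightarrow> colinfo V \<phi> i 1 2 0"
  using colinfo_gen[of V \<phi> i type7] type_counts by simp
lemma colinfo2: "finite V \<Longrightarrow> index_coeffs V \<phi> i = type2 \<Longrightarrow> colinfo V \<phi> i 0 1 0"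
  using colinfo_gen[of V \<phi> i type2] type_counts by simp

lemma types_distinct: "type9 \<noteq> type5" "type9 \<noteq> type4" "type9 \<noteq> type7" "type9 \<noteq> type2"
  "type5 \<noteq> type4" "type5 \<noteq> type7" "type5 \<noteq> type2" "type4 \<noteq> type7" "type4 \<noteq> type2" "type7 \<noteq> type2"
  by (metis type_counts numeral_One zero_neq_one num.distinct(1) numeral_eq_iff semiring_norm(86) semiring_norm(88) semiring_norm(87) semiring_norm(84) zero_neq_numeral)+


lemma dep_exists:
  fixes g :: "'v \<Rightarrow> nat \<Rightarrow> real"
  assumes "finite I"
  shows "finite V \<Longrightarrow> card I < card V \<Longrightarrow> \<exists>c. (\<exists>v\<in>V. c v \<noteq> 0) \<and> (\<forall>i\<in>I. (\<Sum>v\<in>V. c v * g v i) = 0)"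
  using assms
proof (induction I arbitrary: V g rule: finite_induct)
  case empty
  then obtain v where "v \<in> V" by (metis card.empty card.infinite ex_in_conv less_irrefl)
  then show ?case by (intro exI[of _ "\<lambda>_. 1"]) auto
next
  case (insert j I)
  show ?case
  proof (cases "\<forall>v\<in>V. g v j = 0")
    case True
    have "card I < card V" using insert by simp
    then obtain c where c: "\<exists>v\<in>V. c v \<noteq> 0" "\<forall>i\<in>I. (\<Sum>v\<in>V. c v * g v i) = 0"
      using insert.IH[of V g] insert.prems by blast
    show ?thesis using c True by (intro exI[of _ c]) auto
  next
    case False
    then obtain w where w: "w \<in> V" "g w j \<noteq> 0" by blast
    define V' where "V' = V - {w}"
    define g' where "g' = (\<lambda>v i. g v i - g v j / g w j * g w i)"
    have finV': "finite V'" using insert.prems V'_def by simp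
    have "card V' = card V - 1" using w V'_def insert.prems by simp
    then have "card I < card V'" using insert by simp
    then obtain c' where c': "\<exists>v\<in>V'. c' v \<noteq> 0" "\<forall>i\<in>I. (\<Sum>v\<in>V'. c' v * g' v i) = 0"
      using insert.IH[of V' g'] finV' by blast
    define c where "c = (\<lambda>v. if v = w then - (\<Sum>v\<in>V'. c' v * g v j) / g w j else c' v)"
    have split: "(\<Sum>v\<in>V. c v * g v i) = c w * g w i + (\<Sum>v\<in>V'. c' v * g v i)" for i
    proof -
      have "(\<Sum>v\<in>V. c v * g v i) = c w * g w i + (\<Sum>v\<in>V'. c v * g v i)"
        using sum.remove[OF insert.prems(1) w(1)] V'_def by simp
      also have "(\<Sum>v\<in>V'. c v * g v i) = (\<Sum>v\<in>V'. c' v * g v i)"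
        by (intro sum.cong) (auto simp: c_def V'_def)
      finally show ?thesis .
    qed
    show ?thesis
    proof (intro exI[of _ c] conjI ballI)
      show "\<exists>v\<in>V. c v \<noteq> 0" using c' by (auto simp: c_def V'_def)
    next
      fix i assume i: "i \<in> insert j I"
      show "(\<Sum>v\<in>V. c v * g v i) = 0"
      proof (cases "i = j")
        case True
        then show ?thesis using split[of j] w(2) by (simp add: c_def)
      next
        case False
        then have iI: "i \<in> I" using i by simp
        have "(\<Sum>v\<in>V'. c' v * g v i) = (\<Sum>v\<in>V'. c' v * g' v i + (c' v * g v j) * (g w i / g w j))"
          by (intro sum.cong) (auto simp: g'_def algebra_simps)
        also have "\<dots> = (\<Sum>v\<in>V'. c' v * g v j) * (g w i / g w j)"
          using c'(2) iI by (simp add: sum.distrib sum_distrib_right[symmetric] sum_divide_distrib[symmetric])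
        finally show ?thesis using split[of i] w(2) by (simp add: c_def)
      qed
    qed
  qed
qed

lemma sum_nonneg_zero_each:
  fixes f :: "'a \<Rightarrow> real"
  assumes "finite A" "\<forall>x\<in>A. f x \<ge> 0" "sum f A = 0" "x \<in> A"
  shows "f x = 0"
  using sum_nonneg_eq_0_iff[OF assms(1)] assms by blast


lemma kernel_pos:
  fixes \<psi> :: "'v \<Rightarrow> nat \<Rightarrow> real"
  assumes finV: "finite V" and finI: "finite I" and card: "card I < card V"
    and Ein: "\<And>a b. E a b \<Longrightarrow> a \<in> V \<and> b \<in> V"
    and conn: "\<And>a b. a \<in> V \<Longrightarrow> b \<in> V \<Longrightarrow> E\<^sup>*\<^sup>* a b"
    and nonpos: "\<And>v w. v \<in> V \<Longrightarrow> w \<in> V \<Longrightarrow> v \<noteq> w \<Longrightarrow> (\<Sum>i\<in>I. \<psi> v i * \<psi> w i) \<le> 0"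
    and adj: "\<And>v w. E v w \<Longrightarrow> (\<Sum>i\<in>I. \<psi> v i * \<psi> w i) < 0"
  shows "\<exists>c. (\<forall>v\<in>V. c v > 0) \<and> (\<forall>i\<in>I. (\<Sum>v\<in>V. c v * \<psi> v i) = 0)"
proof -
  obtain c where c0: "\<exists>v\<in>V. c v \<noteq> 0" and ck: "\<forall>i\<in>I. (\<Sum>v\<in>V. c v * \<psi> v i) = 0"
    using dep_exists[OF finI finV card] by blast
  define ip where "ip v w = (\<Sum>i\<in>I. \<psi> v i * \<psi> w i)" for v w
  have ipsym: "ip v w = ip w v" for v w unfolding ip_def by (simp add: mult.commute)
  have quad: "(\<Sum>i\<in>I. (\<Sum>v\<in>V. a v * \<psi> v i)^2) = (\<Sum>v\<in>V. \<Sum>w\<in>V. a v * a w * ip v w)" for a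
  proof -
    have "(\<Sum>v\<in>V. a v * \<psi> v i)^2 = (\<Sum>v\<in>V. \<Sum>w\<in>V. a v * a w * (\<psi> v i * \<psi> w i))" for i
      unfolding power2_eq_square sum_product by (intro sum.cong refl) (simp add: mult_ac)
    then have "(\<Sum>i\<in>I. (\<Sum>v\<in>V. a v * \<psi> v i)^2) = (\<Sum>i\<in>I. \<Sum>v\<in>V. \<Sum>w\<in>V. a v * a w * (\<psi> v i * \<psi> w i))"
      by simp
    also have "\<dots> = (\<Sum>v\<in>V. \<Sum>i\<in>I. \<Sum>w\<in>V. a v * a w * (\<psi> v i * \<psi> w i))"
      by (rule sum.swap)
    also have "\<dots> = (\<Sum>v\<in>V. \<Sum>w\<in>V. \<Sum>i\<in>I. a v * a w * (\<psi> v i * \<psi> w i))"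
      by (intro sum.cong refl sum.swap)
    also have "\<dots> = (\<Sum>v\<in>V. \<Sum>w\<in>V. a v * a w * ip v w)"
      by (simp add: ip_def sum_distrib_left)
    finally show ?thesis .
  qed
  have T0: "(\<Sum>v\<in>V. \<Sum>w\<in>V. c v * c w * ip v w) = 0" using quad[of c] ck by simp
  define a where "a v = \<bar>c v\<bar>" for v
  have a0: "a v \<ge> 0" for v by (simp add: a_def)
  have le: "(\<Sum>v\<in>V. \<Sum>w\<in>V. a v * a w * ip v w) \<le> (\<Sum>v\<in>V. \<Sum>w\<in>V. c v * c w * ip v w)"
  proof (intro sum_mono)
    fix v w assume v: "v \<in> V" and w: "w \<in> V"
    show "a v * a w * ip v w \<le> c v * c w * ip v w"
    proof (cases "v = w")
      case True then show ?thesis by (simp add: a_def abs_mult_self_eq)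
    next
      case False
      then have "ip v w \<le> 0" using nonpos v w ip_def by simp
      moreover have "c v * c w \<le> a v * a w" by (simp add: a_def abs_mult[symmetric])
      ultimately show ?thesis by (simp add: mult_right_mono_neg)
    qed
  qed
  have sq0: "(\<Sum>i\<in>I. (\<Sum>v\<in>V. a v * \<psi> v i)^2) = 0"
  proof -
    have "(\<Sum>i\<in>I. (\<Sum>v\<in>V. a v * \<psi> v i)^2) \<ge> 0" by (intro sum_nonneg) simp
    then show ?thesis using le T0 quad[of a] by linarith
  qed
  have ak: "\<forall>i\<in>I. (\<Sum>v\<in>V. a v * \<psi> v i) = 0"
    using sum_nonneg_eq_0_iff[OF finI, of "\<lambda>i. (\<Sum>v\<in>V. a v * \<psi> v i)^2"] sq0 by simp
  have veq: "(\<Sum>v\<in>V. a v * ip v w) = 0" for w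
  proof -
    have "(\<Sum>v\<in>V. a v * ip v w) = (\<Sum>v\<in>V. \<Sum>i\<in>I. \<psi> w i * (a v * \<psi> v i))"
      unfolding ip_def sum_distrib_left by (intro sum.cong refl) (simp add: mult_ac)
    also have "\<dots> = (\<Sum>i\<in>I. \<Sum>v\<in>V. \<psi> w i * (a v * \<psi> v i))"
      by (rule sum.swap)
    also have "\<dots> = (\<Sum>i\<in>I. \<psi> w i * (\<Sum>v\<in>V. a v * \<psi> v i))"
      by (simp add: sum_distrib_left)
    also have "\<dots> = 0" using ak by simp
    finally show ?thesis .
  qed
  have propag: "a v = 0" if "a w = 0" "E w v" for v w
  proof -
    have wV: "w \<in> V" and vV: "v \<in> V" using Ein that(2) by auto
    have "\<forall>t\<in>V. - (a t * ip t w) \<ge> 0"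
    proof
      fix t assume t: "t \<in> V"
      show "- (a t * ip t w) \<ge> 0"
      proof (cases "t = w")
        case True then show ?thesis using that(1) by simp
      next
        case False then have "ip t w \<le> 0" using nonpos t wV ip_def by simp
        then show ?thesis using a0[of t] by (simp add: mult_nonneg_nonpos)
      qed
    qed
    moreover have "(\<Sum>t\<in>V. - (a t * ip t w)) = 0" using veq[of w] by (simp add: sum_negf)
    ultimately have "- (a v * ip v w) = 0" using sum_nonneg_zero_each[OF finV, of "\<lambda>t. - (a t * ip t w)"] vV by blast
    moreover have "ip v w < 0" using adj[OF that(2)] ipsym ip_def by metis
    ultimately show ?thesis by simp
  qed
  obtain v0 where v0: "v0 \<in> V" "c v0 \<noteq> 0" using c0 by blast
  have pos: "a v > 0" if v: "v \<in> V" for v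
  proof (rule ccontr)
    assume "\<not> a v > 0"
    then have av: "a v = 0" using a0[of v] by simp
    have "E\<^sup>*\<^sup>* v v0" using conn v v0 by blast
    then have "a v0 = 0"
    proof (induction rule: rtranclp_induct)
      case base then show ?case using av .
    next
      case (step y z) then show ?case using propag by blast
    qed
    then show False using v0 by (simp add: a_def)
  qed
  show ?thesis using pos ak by blast
qed


lemma pt_facts:
  assumes "plumbing_tree V E"
  shows "finite V" "V \<noteq> {}" "\<And>a b. E a b \<Longrightarrow> a \<in> V \<and> b \<in> V" "\<And>a b. E a b \<Longrightarrow> E b a"
    "\<And>a. \<not> E a a" "\<And>a b. a \<in> V \<Longrightarrow> b \<in> V \<Longrightarrow> E\<^sup>*\<^sup>* a b"
    "card {{a, b} | a b. E a b} = card V - 1"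
  using assms unfolding plumbing_tree_def by blast+

lemma no_triangle:
  assumes pt: "plumbing_tree V E" and ux: "E u x" and uy: "E u y" and xy: "x \<noteq> y"
  shows "\<not> E x y"
proof
  assume Exy: "E x y"
  note f = pt_facts[OF pt]
  define EE where "EE = {{a, b} | a b. E a b}"
  have finEE: "finite EE"
  proof -
    have "EE \<subseteq> Pow V" unfolding EE_def using f(3) by auto
    then show ?thesis using f(1) finite_subset by blast
  qed
  have uV: "u \<in> V" using f(3) ux by blast
  define dist where "dist v = (LEAST k. (E ^^ k) u v)" for v
  have reach: "\<exists>k. (E ^^ k) u v" if "v \<in> V" for v
    using f(6)[OF uV that] rtranclp_power by metis
  have dist_prop: "(E ^^ dist v) u v" if "v \<in> V" for v
    unfolding dist_def using reach[OF that] by (rule LeastI_ex)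
  have dist_min: "dist v \<le> k" if "(E ^^ k) u v" for v k
    unfolding dist_def using that by (rule Least_le)
  have parent: "\<exists>p. E p v \<and> dist p < dist v" if "v \<in> V" "v \<noteq> u" for v
  proof (cases "dist v")
    case 0
    then show ?thesis using dist_prop[OF that(1)] that(2) by simp
  next
    case (Suc k)
    then have "(E ^^ Suc k) u v" using dist_prop[OF that(1)] by simp
    then obtain p where "(E ^^ k) u p" "E p v" by (rule relpowp_Suc_E)
    then show ?thesis using dist_min Suc by force
  qed
  then obtain par where par: "\<And>v. v \<in> V \<Longrightarrow> v \<noteq> u \<Longrightarrow> E (par v) v \<and> dist (par v) < dist v"
    by metis
  have d1: "dist v = 1" if "E u v" for v
  proof -
    have "(E ^^ 1) u v" using that by (simp only: relpowp_1)
    then have "dist v \<le> 1" by (rule dist_min)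
    moreover have "dist v \<noteq> 0"
    proof
      assume "dist v = 0"
      then have "(E ^^ 0) u v" using dist_prop f(3) that by metis
      then show False using that f(5) by simp
    qed
    ultimately show ?thesis by simp
  qed
  define F where "F v = {v, par v}" for v
  have inj: "inj_on F (V - {u})"
  proof (rule inj_onI)
    fix v w assume v: "v \<in> V - {u}" and w: "w \<in> V - {u}" and eq: "F v = F w"
    show "v = w"
    proof (rule ccontr)
      assume "v \<noteq> w"
      then have "v = par w" "w = par v" using eq unfolding F_def by (auto simp: doubleton_eq_iff)
      then show False using par v w by (metis DiffE insertI1 order.asym)
    qed
  qed
  have img: "F ` (V - {u}) \<subseteq> EE - {{x, y}}"
  proof
    fix e assume "e \<in> F ` (V - {u})"
    then obtain v where v: "v \<in> V" "v \<noteq> u" and e: "e = F v" by blast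
    have "e \<in> EE" using par[OF v] e unfolding F_def EE_def by (auto simp: insert_commute)
    moreover have "e \<noteq> {x, y}"
    proof
      assume "e = {x, y}"
      then have "{v, par v} = {x, y}" using e F_def by simp
      moreover have "par v \<noteq> v" using par[OF v] f(5) by metis
      ultimately have "(v = x \<and> par v = y) \<or> (v = y \<and> par v = x)" by (auto simp: doubleton_eq_iff)
      then show False using par[OF v] d1 ux uy by auto
    qed
    ultimately show "e \<in> EE - {{x, y}}" by blast
  qed
  have "card (V - {u}) \<le> card (EE - {{x, y}})"
    using card_inj_on_le[OF inj img] finEE by blast
  moreover have "{x, y} \<in> EE" unfolding EE_def using Exy by blast
  moreover have "card (V - {u}) = card V - 1" using uV f(1) by simp
  moreover have "card V \<ge> 3"
  proof -
    have "{u, x, y} \<subseteq> V" using f(3) ux uy by blast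
    moreover have "u \<noteq> x" "u \<noteq> y" using ux uy f(5) by metis+
    then have "card {u, x, y} = 3" using xy by simp
    ultimately show ?thesis using card_mono f(1) by metis
  qed
  ultimately show False using f(7) finEE unfolding EE_def by simp
qed

lemma conn_blowdown:
  assumes sym: "\<And>a b. E a b \<Longrightarrow> E b a"
    and conn: "\<And>a b. a \<in> V \<Longrightarrow> b \<in> V \<Longrightarrow> E\<^sup>*\<^sup>* a b"
    and a: "a \<in> V" "a \<noteq> u" and b: "b \<in> V" "b \<noteq> u"
  shows "(\<lambda>p q. (E p q \<and> p \<noteq> u \<and> q \<noteq> u) \<or> (p \<noteq> q \<and> E u p \<and> E u q))\<^sup>*\<^sup>* a b"
proof -
  let ?E' = "\<lambda>p q. (E p q \<and> p \<noteq> u \<and> q \<noteq> u) \<or> (p \<noteq> q \<and> E u p \<and> E u q)"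
  have "E\<^sup>*\<^sup>* a t \<Longrightarrow> (t \<noteq> u \<longrightarrow> ?E'\<^sup>*\<^sup>* a t) \<and> (t = u \<longrightarrow> (\<forall>n. E u n \<longrightarrow> ?E'\<^sup>*\<^sup>* a n))" for t
  proof (induction rule: rtranclp_induct)
    case base then show ?case using a by simp
  next
    case (step s t)
    show ?case
    proof (cases "t = u")
      case True
      then have s_ne: "s \<noteq> u \<or> s = u" by simp
      show ?thesis
      proof (cases "s = u")
        case True then show ?thesis using step.IH \<open>t = u\<close> by simp
      next
        case False
        have us: "E u s" using sym step.hyps(2) \<open>t = u\<close> by simp
        have "?E'\<^sup>*\<^sup>* a n" if "E u n" for n
        proof (cases "n = s")
          case True then show ?thesis using step.IH False by simp
        next
          case nF: False
          have "?E' s n" using nF us that by auto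
          moreover have "?E'\<^sup>*\<^sup>* a s" using step.IH False by simp
          ultimately show ?thesis by (rule rtranclp.rtrancl_into_rtrancl[rotated])
        qed
        then show ?thesis using True by simp
      qed
    next
      case False
      show ?thesis
      proof (cases "s = u")
        case True then show ?thesis using step.IH step.hyps(2) False by simp
      next
        case sF: False
        have "?E' s t" using step.hyps(2) sF False by simp
        moreover have "?E'\<^sup>*\<^sup>* a s" using step.IH sF by simp
        ultimately show ?thesis using False by (simp add: rtranclp.rtrancl_into_rtrancl[rotated])
      qed
    qed
  qed
  then show ?thesis using conn[OF a(1) b(1)] b(2) by blast
qed

lemma closed_all:
  assumes Ein: "\<And>p q. E p q \<Longrightarrow> p \<in> V \<and> q \<in> V"
    and conn: "\<And>p q. p \<in> V \<Longrightarrow> q \<in> V \<Longrightarrow> E\<^sup>*\<^sup>* p q"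
    and s: "s \<in> S" "s \<in> V" and closed: "\<And>p q. p \<in> S \<Longrightarrow> E p q \<Longrightarrow> q \<in> S"
  shows "V \<subseteq> S"
proof
  fix b assume b: "b \<in> V"
  have "E\<^sup>*\<^sup>* s b" using conn s b by blast
  then show "b \<in> S"
    by (induction rule: rtranclp_induct) (use s closed in blast)+
qed

lemma cgen_bounds:
  "cgen m E d u \<Longrightarrow> u < m \<and> (\<forall>a b. E a b \<longrightarrow> a < m \<and> b < m)"
  by (induction rule: cgen.induct) (auto simp: Tc_E_def doubleton_eq_iff intro: less_SucI)


definition bd :: "('v \<Rightarrow> 'v \<Rightarrow> bool) \<Rightarrow> 'v \<Rightarrow> 'v \<Rightarrow> 'v \<Rightarrow> bool" where
  "bd E u = (\<lambda>p q. (E p q \<and> p \<noteq> u \<and> q \<noteq> u) \<or> (p \<noteq> q \<and> E u p \<and> E u q))"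

lemma bd_basic:
  assumes pt: "plumbing_tree V E" and ex: "E u x"
  shows "finite (V - {u})" "V - {u} \<noteq> {}" "\<And>a b. bd E u a b \<Longrightarrow> a \<in> V - {u} \<and> b \<in> V - {u}"
    "\<And>a b. bd E u a b \<Longrightarrow> bd E u b a" "\<And>a. \<not> bd E u a a"
    "\<And>a b. a \<in> V - {u} \<Longrightarrow> b \<in> V - {u} \<Longrightarrow> (bd E u)\<^sup>*\<^sup>* a b"
proof -
  note f = pt_facts[OF pt]
  show "finite (V - {u})" using f(1) by simp
  show "V - {u} \<noteq> {}" using ex f(3,5) by blast
  show "\<And>a b. bd E u a b \<Longrightarrow> a \<in> V - {u} \<and> b \<in> V - {u}"
    unfolding bd_def using f(3,5) by blast
  show "\<And>a b. bd E u a b \<Longrightarrow> bd E u b a" unfolding bd_def using f(4) by blast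
  show "\<And>a. \<not> bd E u a a" unfolding bd_def using f(5) by blast
  show "\<And>a b. a \<in> V - {u} \<Longrightarrow> b \<in> V - {u} \<Longrightarrow> (bd E u)\<^sup>*\<^sup>* a b"
    unfolding bd_def using conn_blowdown[OF f(4) f(6)] by blast
qed

lemma bd_tree1:
  assumes pt: "plumbing_tree V E" and ex: "E u x" and only: "\<And>v. E u v \<Longrightarrow> v = x"
  shows "plumbing_tree (V - {u}) (bd E u)"
proof -
  note f = pt_facts[OF pt]
  note b = bd_basic[OF pt ex]
  have eq: "{{a, b} | a b. bd E u a b} = {{a, b} | a b. E a b} - {{u, x}}"
  proof (intro set_eqI iffI)
    fix e assume "e \<in> {{a, b} | a b. bd E u a b}"
    then obtain p q where e: "e = {p, q}" and pq: "bd E u p q" by blast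
    then have "E p q" "p \<noteq> u" "q \<noteq> u" using only unfolding bd_def by auto
    then show "e \<in> {{a, b} | a b. E a b} - {{u, x}}" using e by (auto simp: doubleton_eq_iff)
  next
    fix e assume "e \<in> {{a, b} | a b. E a b} - {{u, x}}"
    then obtain p q where e: "e = {p, q}" and pq: "E p q" and ne: "{p, q} \<noteq> {u, x}" by blast
    have "p \<noteq> u"
    proof
      assume "p = u" then have "q = x" using only pq by simp
      then show False using ne \<open>p = u\<close> by simp
    qed
    moreover have "q \<noteq> u"
    proof
      assume "q = u" then have "p = x" using only pq f(4) by blast
      then show False using ne \<open>q = u\<close> by (simp add: insert_commute)
    qed
    ultimately show "e \<in> {{a, b} | a b. bd E u a b}" using e pq unfolding bd_def by blast
  qed
  have finEE: "finite {{a, b} | a b. E a b}"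
  proof -
    have "{{a, b} | a b. E a b} \<subseteq> Pow V" using f(3) by auto
    then show ?thesis using f(1) finite_subset by blast
  qed
  have mem: "{u, x} \<in> {{a, b} | a b. E a b}" using ex by blast
  have uV: "u \<in> V" using ex f(3) by blast
  have "card {{a, b} | a b. bd E u a b} = card (V - {u}) - 1"
    unfolding eq using f(7) finEE mem uV f(1) by (simp add: card_Diff_singleton)
  then show ?thesis unfolding plumbing_tree_def using b by blast
qed

lemma bd_tree2:
  assumes pt: "plumbing_tree V E" and ex: "E u x" "E u y" "x \<noteq> y" and only: "\<And>v. E u v \<Longrightarrow> v = x \<or> v = y"
  shows "plumbing_tree (V - {u}) (bd E u)"
proof -
  note f = pt_facts[OF pt]
  note b = bd_basic[OF pt ex(1)]
  have nxy: "\<not> E x y" using no_triangle[OF pt ex] .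
  let ?EE = "{{a, b} | a b. E a b}"
  have eq: "{{a, b} | a b. bd E u a b} = insert {x, y} (?EE - {{u, x}, {u, y}})"
  proof (intro set_eqI iffI)
    fix e assume "e \<in> {{a, b} | a b. bd E u a b}"
    then obtain p q where e: "e = {p, q}" and pq: "bd E u p q" by blast
    show "e \<in> insert {x, y} (?EE - {{u, x}, {u, y}})"
    proof (cases "E p q \<and> p \<noteq> u \<and> q \<noteq> u")
      case True then show ?thesis using e by (auto simp: doubleton_eq_iff)
    next
      case False
      then have "p \<noteq> q" "E u p" "E u q" using pq unfolding bd_def by auto
      then have "e = {x, y}" using only e by (metis insert_commute)
      then show ?thesis by simp
    qed
  next
    fix e assume e0: "e \<in> insert {x, y} (?EE - {{u, x}, {u, y}})"
    show "e \<in> {{a, b} | a b. bd E u a b}"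
    proof (cases "e = {x, y}")
      case True then show ?thesis using ex unfolding bd_def by blast
    next
      case False
      then obtain p q where e: "e = {p, q}" and pq: "E p q" and ne: "{p, q} \<noteq> {u, x}" "{p, q} \<noteq> {u, y}"
        using e0 by blast
      have "p \<noteq> u"
      proof
        assume "p = u" then show False using only pq ne by auto
      qed
      moreover have "q \<noteq> u"
      proof
        assume "q = u" then have "E u p" using pq f(4) by blast
        then show False using only ne \<open>q = u\<close> by (auto simp: insert_commute)
      qed
      ultimately show ?thesis using e pq unfolding bd_def by blast
    qed
  qed
  have finEE: "finite ?EE"
  proof -
    have "?EE \<subseteq> Pow V" using f(3) by auto
    then show ?thesis using f(1) finite_subset by blast
  qed
  have m1: "{u, x} \<in> ?EE" using ex by blast
  have m2: "{u, y} \<in> ?EE" using ex by blast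
  have n12: "{u, x} \<noteq> {u, y}" using ex(3) by (auto simp: doubleton_eq_iff)
  have nxyE: "{x, y} \<notin> ?EE"
  proof
    assume "{x, y} \<in> ?EE"
    then obtain p q where "{x, y} = {p, q}" "E p q" by blast
    then show False using nxy f(4) by (auto simp: doubleton_eq_iff)
  qed
  have uV: "u \<in> V" using ex f(3) by blast
  have sub: "{{u, x}, {u, y}} \<subseteq> ?EE" using m1 m2 by blast
  have c2: "card {{u, x}, {u, y}} = 2" using n12 by simp
  have ge: "card ?EE \<ge> 2" using card_mono[OF finEE sub] c2 by simp
  have c1: "card (?EE - {{u, x}, {u, y}}) = card ?EE - 2"
    using card_Diff_subset[of "{{u, x}, {u, y}}" ?EE] sub c2 by simp
  have "{x, y} \<notin> ?EE - {{u, x}, {u, y}}" using nxyE by blast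
  then have "card {{a, b} | a b. bd E u a b} = card ?EE - 2 + 1"
    unfolding eq using c1 finEE by simp
  also have "\<dots> = card (V - {u}) - 1" using f(7) ge uV f(1) by simp
  finally show ?thesis unfolding plumbing_tree_def using b by blast
qed


definition QI :: "nat set \<Rightarrow> (nat \<Rightarrow> int) \<Rightarrow> (nat \<Rightarrow> int) \<Rightarrow> int" where
  "QI I x y = - (\<Sum>i\<in>I. x i * y i)"

definition Inv :: "'v set \<Rightarrow> ('v \<Rightarrow> 'v \<Rightarrow> bool) \<Rightarrow> ('v \<Rightarrow> int) \<Rightarrow> ('v \<Rightarrow> nat \<Rightarrow> int) \<Rightarrow> nat set \<Rightarrow> 'v \<Rightarrow> bool" where
  "Inv V E d \<phi> I u \<longleftrightarrow> plumbing_tree V E \<and> finite I \<and> card I + 1 = card V \<and>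
     (\<forall>v\<in>V. \<forall>w\<in>V. v \<noteq> w \<longrightarrow> QI I (\<phi> v) (\<phi> w) = (if E v w then 1 else 0)) \<and>
     (\<forall>v\<in>V. QI I (\<phi> v) (\<phi> v) = d v) \<and>
     (\<forall>v\<in>V. (\<Sum>i\<in>I. \<phi> v i) = d v + 2) \<and>
     u \<in> V \<and> d u = -1 \<and> (\<forall>v\<in>V. v \<noteq> u \<longrightarrow> d v \<noteq> -1) \<and>
     (\<forall>i\<in>I. index_coeffs V \<phi> i \<in> {type9, type5, type4, type7}) \<and>
     card {i\<in>I. index_coeffs V \<phi> i = type9} = 1 \<and>
     card {i\<in>I. index_coeffs V \<phi> i = type5} = 1"

lemma unit_vec:
  fixes f :: "nat \<Rightarrow> int"
  assumes fin: "finite J" and sq: "(\<Sum>i\<in>J. f i * f i) = 1" and s: "(\<Sum>i\<in>J. f i) = 1"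
  shows "\<exists>b\<in>J. \<forall>i\<in>J. f i = (if i = b then 1 else 0)"
proof -
  have nn: "\<forall>i\<in>J. f i * f i - f i \<ge> 0"
  proof
    fix i show "f i * f i - f i \<ge> 0"
    proof (cases "f i \<le> 0")
      case True then show ?thesis using zero_le_square[of "f i"] by linarith
    next
      case False then have "f i \<ge> 1" by simp
      then have "f i * f i \<ge> f i * 1" by (intro mult_left_mono) auto
      then show ?thesis by simp
    qed
  qed
  have "(\<Sum>i\<in>J. f i * f i - f i) = 0" using sq s by (simp add: sum_subtractf)
  then have z: "\<forall>i\<in>J. f i * f i - f i = 0"
    using sum_nonneg_eq_0_iff[OF fin, of "\<lambda>i. f i * f i - f i"] nn by simp
  have f01: "\<forall>i\<in>J. f i = 0 \<or> f i = 1"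
  proof
    fix i assume "i \<in> J"
    then have "f i * (f i - 1) = 0" using z by (simp add: right_diff_distrib)
    then show "f i = 0 \<or> f i = 1" by simp
  qed
  have "(\<Sum>i\<in>J. f i) = (\<Sum>i\<in>{i\<in>J. f i = 1}. f i)"
    using fin f01 by (intro sum.mono_neutral_right) auto
  also have "\<dots> = (\<Sum>i\<in>{i\<in>J. f i = 1}. 1)" by (intro sum.cong) auto
  finally have "(\<Sum>i\<in>J. f i) = card {i\<in>J. f i = 1}" by simp
  then have "card {i\<in>J. f i = 1} = 1" using s by simp
  then obtain b where b: "{i\<in>J. f i = 1} = {b}" using card_1_singletonE by blast
  then have "b \<in> J" by blast
  moreover have "\<forall>i\<in>J. f i = (if i = b then 1 else 0)"
  proof
    fix i assume i: "i \<in> J"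
    have "i \<in> {i\<in>J. f i = 1} \<longleftrightarrow> i \<in> {b}" by (simp only: b)
    then have "f i = 1 \<longleftrightarrow> i = b" using i by simp
    then show "f i = (if i = b then 1 else 0)" using f01 i by auto
  qed
  ultimately show ?thesis by blast
qed

lemma exists_pos:
  fixes c t :: "'v \<Rightarrow> real"
  assumes "finite V" "\<forall>v\<in>V. c v > 0" "(\<Sum>v\<in>V. c v * t v) = 0" "q \<in> V" "t q < 0"
  shows "\<exists>v\<in>V. t v > 0"
proof (rule ccontr)
  assume "\<not> (\<exists>v\<in>V. t v > 0)"
  then have "\<forall>v\<in>V. c v * t v \<le> 0" using assms(2) by (auto intro!: mult_nonneg_nonpos simp: less_imp_le not_less)
  then have "\<forall>v\<in>V. - (c v * t v) \<ge> 0" by simp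
  moreover have "(\<Sum>v\<in>V. - (c v * t v)) = 0" using assms(3) by (simp add: sum_negf)
  ultimately have "- (c q * t q) = 0" using sum_nonneg_zero_each[OF assms(1), of "\<lambda>v. - (c v * t v)"] assms(4) by blast
  moreover have "c q > 0" using assms(2,4) by blast
  ultimately show False using assms(5) by simp
qed

lemma ksum:
  fixes c :: "'v \<Rightarrow> real" and \<psi> :: "'v \<Rightarrow> nat \<Rightarrow> real"
  assumes "\<forall>i\<in>J. (\<Sum>v\<in>V. c v * \<psi> v i) = 0"
  shows "(\<Sum>v\<in>V. c v * (\<Sum>i\<in>J. \<psi> v i)) = 0"
proof -
  have "(\<Sum>v\<in>V. c v * (\<Sum>i\<in>J. \<psi> v i)) = (\<Sum>v\<in>V. \<Sum>i\<in>J. c v * \<psi> v i)"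
    by (simp add: sum_distrib_left)
  also have "\<dots> = (\<Sum>i\<in>J. \<Sum>v\<in>V. c v * \<psi> v i)" by (rule sum.swap)
  also have "\<dots> = 0" using assms by simp
  finally show ?thesis .
qed

context
  fixes V :: "'v set" and E d \<phi> I u
  assumes inv: "Inv V E d \<phi> I u"
begin

lemma inv_facts:
  "plumbing_tree V E" "finite I" "card I + 1 = card V"
  "\<And>v w. v\<in>V \<Longrightarrow> w\<in>V \<Longrightarrow> v \<noteq> w \<Longrightarrow> QI I (\<phi> v) (\<phi> w) = (if E v w then 1 else 0)"
  "\<And>v. v\<in>V \<Longrightarrow> QI I (\<phi> v) (\<phi> v) = d v"
  "\<And>v. v\<in>V \<Longrightarrow> (\<Sum>i\<in>I. \<phi> v i) = d v + 2"
  "u \<in> V" "d u = -1" "\<And>v. v\<in>V \<Longrightarrow> v \<noteq> u \<Longrightarrow> d v \<noteq> -1"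
  "\<And>i. i\<in>I \<Longrightarrow> index_coeffs V \<phi> i \<in> {type9, type5, type4, type7}"
  "card {i\<in>I. index_coeffs V \<phi> i = type9} = 1"
  "card {i\<in>I. index_coeffs V \<phi> i = type5} = 1"
  using inv unfolding Inv_def by blast+

lemmas pf = pt_facts[OF inv_facts(1)]

lemma d_le: assumes "v \<in> V" shows "d v \<le> -1"
proof -
  have dv: "d v = - (\<Sum>i\<in>I. \<phi> v i * \<phi> v i)" using inv_facts(5)[OF assms] by (simp add: QI_def)
  have "(\<Sum>i\<in>I. \<phi> v i * \<phi> v i) \<ge> 0" by (intro sum_nonneg) simp
  moreover have "(\<Sum>i\<in>I. \<phi> v i * \<phi> v i) \<noteq> 0"
  proof
    assume "(\<Sum>i\<in>I. \<phi> v i * \<phi> v i) = 0"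
    then have "\<forall>i\<in>I. \<phi> v i * \<phi> v i = 0" using sum_nonneg_eq_0_iff[OF inv_facts(2), of "\<lambda>i. \<phi> v i * \<phi> v i"] by simp
    then have "(\<Sum>i\<in>I. \<phi> v i) = 0" by simp
    then show False using inv_facts(6)[OF assms] dv \<open>(\<Sum>i\<in>I. \<phi> v i * \<phi> v i) = 0\<close> by simp
  qed
  ultimately show ?thesis using dv by simp
qed

lemma d_le2: "v \<in> V \<Longrightarrow> v \<noteq> u \<Longrightarrow> d v \<le> -2"
  using d_le inv_facts(9) by fastforce

lemma u_form: "\<exists>a\<in>I. \<forall>i\<in>I. \<phi> u i = (if i = a then 1 else 0)"
proof -
  have "(\<Sum>i\<in>I. \<phi> u i * \<phi> u i) = 1" using inv_facts(5)[OF inv_facts(7)] inv_facts(8) by (simp add: QI_def)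
  moreover have "(\<Sum>i\<in>I. \<phi> u i) = 1" using inv_facts(6)[OF inv_facts(7)] inv_facts(8) by simp
  ultimately show ?thesis using unit_vec[OF inv_facts(2)] by blast
qed

lemma QI_unit: assumes "a \<in> I" "\<forall>i\<in>I. x i = (if i = a then 1 else 0)"
  shows "QI I x y = - y a"
proof -
  have "(\<Sum>i\<in>I. x i * y i) = (\<Sum>i\<in>I. if i = a then y i else 0)"
    using assms(2) by (intro sum.cong) auto
  also have "\<dots> = y a" using assms(1) inv_facts(2) by simp
  finally show ?thesis by (simp add: QI_def)
qed

lemma nbr:
  assumes a: "a \<in> I" "\<forall>i\<in>I. \<phi> u i = (if i = a then 1 else 0)" and v: "v \<in> V" "v \<noteq> u"
  shows "(E u v \<longleftrightarrow> \<phi> v a = -1) \<and> (\<phi> v a = 0 \<or> \<phi> v a = -1)"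
  using inv_facts(4)[OF inv_facts(7) v(1)] v(2) QI_unit[OF a, of "\<phi> v"]
  by (auto split: if_splits)

lemma q_exists: "\<exists>q\<in>V. \<exists>i\<in>I. \<phi> q i = -2 \<and> d q \<le> -4"
proof -
  obtain i5 where i5: "{i\<in>I. index_coeffs V \<phi> i = type5} = {i5}"
    using inv_facts(12) card_1_singletonE by blast
  then have i5I: "i5 \<in> I" and t5: "index_coeffs V \<phi> i5 = type5" by auto
  have "card {v\<in>V. \<phi> v i5 = -2} = 1" using colinfo5[OF pf(1) t5] unfolding colinfo_def by blast
  then obtain q where q: "{v\<in>V. \<phi> v i5 = -2} = {q}" using card_1_singletonE by blast
  then have qV: "q \<in> V" and qi: "\<phi> q i5 = -2" by auto
  have "\<phi> q i5 * \<phi> q i5 \<le> (\<Sum>i\<in>I. \<phi> q i * \<phi> q i)"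
    using member_le_sum[OF i5I, of "\<lambda>i. \<phi> q i * \<phi> q i"] inv_facts(2) by simp
  then have "d q \<le> -4" using inv_facts(5)[OF qV] qi by (simp add: QI_def)
  then show ?thesis using qV i5I qi by blast
qed

lemma kernel:
  "\<exists>c. (\<forall>v\<in>V. c v > 0) \<and> (\<forall>i\<in>I. (\<Sum>v\<in>V. c v * real_of_int (\<phi> v i)) = 0)"
proof (rule kernel_pos[where E=E])
  show "finite V" using pf(1) .
  show "finite I" using inv_facts(2) .
  show "card I < card V" using inv_facts(3) by simp
  show "\<And>a b. E a b \<Longrightarrow> a \<in> V \<and> b \<in> V" using pf(3) .
  show "\<And>a b. a \<in> V \<Longrightarrow> b \<in> V \<Longrightarrow> E\<^sup>*\<^sup>* a b" using pf(6) .
  have ip: "(\<Sum>i\<in>I. real_of_int (\<phi> v i) * real_of_int (\<phi> w i)) = - real_of_int (QI I (\<phi> v) (\<phi> w))" for v w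
    by (simp add: QI_def)
  show "\<And>v w. v \<in> V \<Longrightarrow> w \<in> V \<Longrightarrow> v \<noteq> w \<Longrightarrow> (\<Sum>i\<in>I. real_of_int (\<phi> v i) * real_of_int (\<phi> w i)) \<le> 0"
    using ip inv_facts(4) by simp
  show "\<And>v w. E v w \<Longrightarrow> (\<Sum>i\<in>I. real_of_int (\<phi> v i) * real_of_int (\<phi> w i)) < 0"
  proof -
    fix v w assume e: "E v w"
    then have "v \<noteq> w" "v \<in> V" "w \<in> V" using pf(3,5) by metis+
    then show "(\<Sum>i\<in>I. real_of_int (\<phi> v i) * real_of_int (\<phi> w i)) < 0"
      using ip inv_facts(4) e by simp
  qed
qed

lemma kernel_d:
  assumes "\<forall>i\<in>I. (\<Sum>v\<in>V. c v * real_of_int (\<phi> v i)) = 0"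
  shows "(\<Sum>v\<in>V. c v * real_of_int (d v + 2)) = 0"
proof -
  have "(\<Sum>v\<in>V. c v * real_of_int (d v + 2)) = (\<Sum>v\<in>V. c v * (\<Sum>i\<in>I. real_of_int (\<phi> v i)))"
    using inv_facts(6) by (intro sum.cong) (auto simp flip: of_int_sum)
  also have "\<dots> = 0" by (rule ksum[OF assms])
  finally show ?thesis .
qed

lemma neg2_nbr:
  assumes a: "a \<in> I" "\<forall>i\<in>I. \<phi> u i = (if i = a then 1 else 0)"
  shows "\<exists>v\<in>V. \<phi> v a = -1 \<and> d v = -2"
proof -
  obtain c where c: "\<forall>v\<in>V. c v > 0" "\<forall>i\<in>I. (\<Sum>v\<in>V. c v * real_of_int (\<phi> v i)) = 0"
    using kernel by blast
  define t where "t v = real_of_int (d v + 2 - \<phi> v a)" for v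
  have "(\<Sum>v\<in>V. c v * t v) = (\<Sum>v\<in>V. c v * real_of_int (d v + 2)) - (\<Sum>v\<in>V. c v * real_of_int (\<phi> v a))"
    unfolding t_def by (simp add: sum_subtractf[symmetric] right_diff_distrib)
  also have "\<dots> = 0" using kernel_d[OF c(2)] bspec[OF c(2) a(1)] by linarith
  finally have st: "(\<Sum>v\<in>V. c v * t v) = 0" .
  obtain q i where q: "q \<in> V" "i \<in> I" "\<phi> q i = -2" "d q \<le> -4" using q_exists by blast
  have qu: "q \<noteq> u"
  proof
    assume "q = u" then have "\<phi> u i = -2" using q by simp
    then show False using a(2) q(2) by (simp split: if_splits)
  qed
  have "\<phi> q a = 0 \<or> \<phi> q a = -1" using nbr[OF a q(1) qu] by blast
  then have "t q < 0" using q(4) unfolding t_def by auto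
  then obtain v where v: "v \<in> V" "t v > 0" using exists_pos[OF pf(1) c(1) st q(1)] by blast
  have ua: "\<phi> u a = 1" using a by simp
  have vu: "v \<noteq> u"
  proof
    assume "v = u" then show False using v(2) ua inv_facts(8) unfolding t_def by simp
  qed
  have n: "\<phi> v a = 0 \<or> \<phi> v a = -1" using nbr[OF a v(1) vu] by blast
  have dv: "d v \<le> -2" using d_le2[OF v(1) vu] .
  have "d v + 2 - \<phi> v a > 0" using v(2) unfolding t_def by linarith
  then have "\<phi> v a = -1 \<and> d v = -2" using n dv by auto
  then show ?thesis using v(1) by blast
qed

end


lemma QI_remove: "finite I \<Longrightarrow> a \<in> I \<Longrightarrow> QI (I - {a}) x y = QI I x y + x a * y a"
  unfolding QI_def by (simp add: sum.remove[of I a])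

lemma sum_remove_int: "finite I \<Longrightarrow> a \<in> I \<Longrightarrow> (\<Sum>i\<in>I - {a}. f i) = (\<Sum>i\<in>I. f i) - (f a :: int)"
  by (simp add: sum.remove[of I a])

lemma QI_unit_gen: assumes "finite J" "b \<in> J" "\<forall>i\<in>J. f i = (if i = b then 1 else 0)"
  shows "QI J f g = - g b"
proof -
  have "(\<Sum>i\<in>J. f i * g i) = (\<Sum>i\<in>J. if i = b then g i else 0)"
    using assms(3) by (intro sum.cong) auto
  also have "\<dots> = g b" using assms(1,2) by simp
  finally show ?thesis by (simp add: QI_def)
qed

lemma ic_remove: "\<phi> u i = 0 \<Longrightarrow> index_coeffs (V - {u}) \<phi> i = index_coeffs V \<phi> i"
  unfolding index_coeffs_def by (rule arg_cong[where f="\<lambda>A. image_mset (\<lambda>v. \<phi> v i) (mset_set A)"]) auto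

context
  fixes V :: "'v set" and E d \<phi> I u
  assumes inv: "Inv V E d \<phi> I u"
begin

lemma nbr_iff:
  assumes a: "a \<in> I" "\<forall>i\<in>I. \<phi> u i = (if i = a then 1 else 0)"
  shows "E u v \<longleftrightarrow> v \<in> V \<and> v \<noteq> u \<and> \<phi> v a = -1"
proof
  assume e: "E u v"
  then have "v \<in> V" "v \<noteq> u" using pf[OF inv] by metis+
  then show "v \<in> V \<and> v \<noteq> u \<and> \<phi> v a = -1" using nbr[OF inv a] e by blast
next
  assume "v \<in> V \<and> v \<noteq> u \<and> \<phi> v a = -1"
  then show "E u v" using nbr[OF inv a] by blast
qed

lemma col_a_type:
  assumes a: "a \<in> I" "\<forall>i\<in>I. \<phi> u i = (if i = a then 1 else 0)"
  shows "index_coeffs V \<phi> a \<noteq> type5"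
proof
  assume t: "index_coeffs V \<phi> a = type5"
  have "card {v\<in>V. \<phi> v a = -2} = 1" using colinfo5[OF pf(1)[OF inv] t] unfolding colinfo_def by blast
  then obtain q where qs: "{v\<in>V. \<phi> v a = -2} = {q}" using card_1_singletonE by blast
  have "q \<in> {v\<in>V. \<phi> v a = -2}" unfolding qs by simp
  then have qV: "q \<in> V" and qa: "\<phi> q a = -2" by auto
  have ua: "\<phi> u a = 1" using a by simp
  have "q \<noteq> u" using ua qa by auto
  then have "\<phi> q a = 0 \<or> \<phi> q a = -1" using nbr[OF inv a qV] by blast
  then show False using qa by simp
qed

lemma step_inv:
  assumes a: "a \<in> I" "\<forall>i\<in>I. \<phi> u i = (if i = a then 1 else 0)"
    and ta: "index_coeffs V \<phi> a \<noteq> type9"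
    and x: "x \<in> V" "\<phi> x a = -1" "d x = -2"
  shows "Inv (V - {u}) (bd E u) (\<lambda>v. d v + \<phi> v a * \<phi> v a) \<phi> (I - {a}) x"
proof -
  note F = inv_facts[OF inv]
  note f = pf[OF inv]
  define d' where "d' v = d v + \<phi> v a * \<phi> v a" for v
  have ua: "\<phi> u a = 1" using a by simp
  have xu: "x \<noteq> u"
  proof
    assume "x = u" then show False using x(2) ua by simp
  qed
  have Eux: "E u x" using nbr_iff[OF a, of x] x(1,2) xu by simp
  have N: "{v\<in>V. \<phi> v a = -1} = {v. E u v}"
  proof (rule set_eqI)
    fix v show "v \<in> {v\<in>V. \<phi> v a = -1} \<longleftrightarrow> v \<in> {v. E u v}"
      using nbr_iff[OF a, of v] ua by auto
  qed
  have ta5: "index_coeffs V \<phi> a \<noteq> type5" using col_a_type[OF a] .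
  have tya: "index_coeffs V \<phi> a = type4 \<or> index_coeffs V \<phi> a = type7"
    using F(10)[OF a(1)] ta ta5 by simp
  have tree': "plumbing_tree (V - {u}) (bd E u)"
  proof (cases "index_coeffs V \<phi> a = type4")
    case True
    have "card {v. E u v} = 1" using colinfo4[OF f(1) True] N unfolding colinfo_def by simp
    then obtain z where z: "{v. E u v} = {z}" using card_1_singletonE by blast
    have zi: "E u v \<longleftrightarrow> v = z" for v using z by (metis mem_Collect_eq singleton_iff)
    have "x = z" using zi[of x] Eux by simp
    then have "\<And>v. E u v \<Longrightarrow> v = x" using zi by simp
    then show ?thesis using bd_tree1[OF F(1) Eux] by blast
  next
    case False
    then have t7: "index_coeffs V \<phi> a = type7" using tya by blast
    have "card {v. E u v} = 2" using colinfo7[OF f(1) t7] N unfolding colinfo_def by simp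
    then obtain p q where pq: "{v. E u v} = {p, q}" "p \<noteq> q" by (meson card_2_iff)
    have pqi: "E u v \<longleftrightarrow> v = p \<or> v = q" for v
    proof -
      have "E u v \<longleftrightarrow> v \<in> {v. E u v}" by simp
      also have "\<dots> \<longleftrightarrow> v \<in> {p, q}" by (simp only: pq(1))
      finally show ?thesis by simp
    qed
    define y where "y = (if x = p then q else p)"
    have xpq: "x = p \<or> x = q" using pqi[of x] Eux by simp
    have y1: "y \<noteq> x" using xpq pq(2) unfolding y_def by auto
    have y2: "E u y" using pqi[of y] unfolding y_def by simp
    have y: "y \<noteq> x" "E u y" using y1 y2 by auto
    have only: "\<And>v. E u v \<Longrightarrow> v = x \<or> v = y"
    proof -
      fix v assume "E u v" then have "v = p \<or> v = q" using pqi by simp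
      then show "v = x \<or> v = y" using xpq unfolding y_def by auto
    qed
    show ?thesis using bd_tree2[OF F(1) Eux y(2) y(1)[symmetric] only] .
  qed
  have finI': "finite (I - {a})" using F(2) by simp
  have c1: "card (I - {a}) = card I - 1" using F(2) a(1) by simp
  have c2: "card (V - {u}) = card V - 1" using f(1) F(7) by simp
  have c3: "card I > 0" using F(2) a(1) card_gt_0_iff by blast
  have cardI': "card (I - {a}) + 1 = card (V - {u})" using c1 c2 c3 F(3) by linarith
  have phia: "\<phi> v a = 0 \<or> \<phi> v a = -1" if "v \<in> V - {u}" for v
    using nbr[OF inv a] that by blast
  have gram': "QI (I - {a}) (\<phi> v) (\<phi> w) = (if bd E u v w then 1 else 0)"
    if v: "v \<in> V - {u}" and w: "w \<in> V - {u}" and vw: "v \<noteq> w" for v w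
  proof -
    have q: "QI (I - {a}) (\<phi> v) (\<phi> w) = QI I (\<phi> v) (\<phi> w) + \<phi> v a * \<phi> w a"
      using QI_remove[OF F(2) a(1)] by simp
    show ?thesis
    proof (cases "E u v \<and> E u w")
      case True
      then have "\<not> E v w" using no_triangle[OF F(1)] vw by blast
      moreover have "\<phi> v a = -1" "\<phi> w a = -1" using True nbr_iff[OF a] by blast+
      moreover have "bd E u v w" using True vw unfolding bd_def by blast
      ultimately show ?thesis using q F(4) v w vw by simp
    next
      case False
      then have "\<phi> v a * \<phi> w a = 0" using phia[OF v] phia[OF w] nbr_iff[OF a] v w by auto
      moreover have "bd E u v w \<longleftrightarrow> E v w" using False v w unfolding bd_def by blast
      ultimately show ?thesis using q F(4) v w vw by simp
    qed
  qed
  have self': "QI (I - {a}) (\<phi> v) (\<phi> v) = d' v" if "v \<in> V - {u}" for v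
    using QI_remove[OF F(2) a(1)] F(5) that d'_def by simp
  have K': "(\<Sum>i\<in>I - {a}. \<phi> v i) = d' v + 2" if "v \<in> V - {u}" for v
  proof -
    have "(\<Sum>i\<in>I - {a}. \<phi> v i) = d v + 2 - \<phi> v a" using sum_remove_int[OF F(2) a(1)] F(6) that by simp
    then show ?thesis using phia[OF that] d'_def by auto
  qed
  have xV': "x \<in> V - {u}" using x xu by blast
  have dx': "d' x = -1" using x d'_def by simp
  have uniq: "d' v \<noteq> -1" if v: "v \<in> V - {u}" "v \<noteq> x" for v
  proof
    assume dv: "d' v = -1"
    have vu: "v \<noteq> u" using v by blast
    have "\<phi> v a = -1"
    proof (rule ccontr)
      assume "\<phi> v a \<noteq> -1" then have "\<phi> v a = 0" using phia[OF v(1)] by blast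
      then show False using dv d'_def F(9) v by auto
    qed
    have unitv: "\<exists>b\<in>I - {a}. \<forall>i\<in>I - {a}. \<phi> w i = (if i = b then 1 else 0)"
      if w: "w \<in> V - {u}" "d' w = -1" for w
    proof (rule unit_vec[OF finI'])
      show "(\<Sum>i\<in>I - {a}. \<phi> w i * \<phi> w i) = 1" using self'[OF w(1)] w(2) by (simp add: QI_def)
      show "(\<Sum>i\<in>I - {a}. \<phi> w i) = 1" using K'[OF w(1)] w(2) by simp
    qed
    obtain b where b: "b \<in> I - {a}" "\<forall>i\<in>I - {a}. \<phi> x i = (if i = b then 1 else 0)"
      using unitv[OF xV' dx'] by blast
    obtain b' where b': "b' \<in> I - {a}" "\<forall>i\<in>I - {a}. \<phi> v i = (if i = b' then 1 else 0)"
      using unitv[OF v(1) dv] by blast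
    have "QI (I - {a}) (\<phi> x) (\<phi> v) = - \<phi> v b" using QI_unit_gen[OF finI' b] by simp
    then have le: "QI (I - {a}) (\<phi> x) (\<phi> v) \<le> 0" using b' b(1) by auto
    have "bd E u x v" using Eux \<open>\<phi> v a = -1\<close> nbr_iff[OF a] v vu unfolding bd_def by auto
    then show False using gram'[OF xV' v(1)] v(2) le by simp
  qed
  have ic: "index_coeffs (V - {u}) \<phi> i = index_coeffs V \<phi> i" if "i \<in> I - {a}" for i
    using ic_remove[of \<phi> u i V] a that by simp
  have types': "\<forall>i\<in>I - {a}. index_coeffs (V - {u}) \<phi> i \<in> {type9, type5, type4, type7}"
  proof
    fix i assume i: "i \<in> I - {a}"
    show "index_coeffs (V - {u}) \<phi> i \<in> {type9, type5, type4, type7}"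
      unfolding ic[OF i] using F(10) i by blast
  qed
  have c9: "{i\<in>I - {a}. index_coeffs (V - {u}) \<phi> i = type9} = {i\<in>I. index_coeffs V \<phi> i = type9}"
  proof (rule set_eqI)
    fix i show "i \<in> {i\<in>I - {a}. index_coeffs (V - {u}) \<phi> i = type9} \<longleftrightarrow> i \<in> {i\<in>I. index_coeffs V \<phi> i = type9}"
    proof (cases "i \<in> I - {a}")
      case True then show ?thesis using ic[OF True] by simp
    next
      case False then show ?thesis using ta by auto
    qed
  qed
  have c5: "{i\<in>I - {a}. index_coeffs (V - {u}) \<phi> i = type5} = {i\<in>I. index_coeffs V \<phi> i = type5}"
  proof (rule set_eqI)
    fix i show "i \<in> {i\<in>I - {a}. index_coeffs (V - {u}) \<phi> i = type5} \<longleftrightarrow> i \<in> {i\<in>I. index_coeffs V \<phi> i = type5}"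
    proof (cases "i \<in> I - {a}")
      case True then show ?thesis using ic[OF True] by simp
    next
      case False then show ?thesis using ta5 by auto
    qed
  qed
  have gram'': "\<forall>v\<in>V - {u}. \<forall>w\<in>V - {u}. v \<noteq> w \<longrightarrow> QI (I - {a}) (\<phi> v) (\<phi> w) = (if bd E u v w then 1 else 0)"
    using gram' by blast
  have self'': "\<forall>v\<in>V - {u}. QI (I - {a}) (\<phi> v) (\<phi> v) = d' v" using self' by blast
  have K'': "\<forall>v\<in>V - {u}. (\<Sum>i\<in>I - {a}. \<phi> v i) = d' v + 2" using K' by blast
  have uniq': "\<forall>v\<in>V - {u}. v \<noteq> x \<longrightarrow> d' v \<noteq> -1" using uniq by blast
  have "Inv (V - {u}) (bd E u) d' \<phi> (I - {a}) x"
    unfolding Inv_def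
    using tree' finI' cardI' gram'' self'' K'' xV' dx' uniq' types' c9 c5 F(11) F(12) by simp
  then show ?thesis unfolding d'_def .
qed

end


lemma sum_two_supp:
  fixes g :: "nat \<Rightarrow> int"
  assumes "finite I" "a \<in> I" "b \<in> I" "a \<noteq> b"
    and "\<forall>i\<in>I. f i = (if i = a then -1 else if i = b then 1 else 0)"
  shows "(\<Sum>i\<in>I. f i * g i) = g b - g a"
proof -
  have "(\<Sum>i\<in>I. f i * g i) = (\<Sum>i\<in>I. (if i = b then g i else 0) - (if i = a then g i else 0))"
    using assms(4,5) by (intro sum.cong) auto
  also have "\<dots> = g b - g a" using assms(1,2,3) by (simp add: sum_subtractf)
  finally show ?thesis .
qed

lemma sum_remove2:
  fixes f :: "nat \<Rightarrow> 'a::ab_group_add"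
  assumes "finite I" "a \<in> I" "b \<in> I" "a \<noteq> b"
  shows "(\<Sum>i\<in>I - {a, b}. f i) = (\<Sum>i\<in>I. f i) - f a - f b"
proof -
  have "I - {a, b} = (I - {a}) - {b}" by blast
  then have "(\<Sum>i\<in>I - {a, b}. f i) = (\<Sum>i\<in>I - {a}. f i) - f b"
    using assms by (simp add: sum_diff1)
  also have "\<dots> = (\<Sum>i\<in>I. f i) - f a - f b" using assms by (simp add: sum_diff1)
  finally show ?thesis .
qed

context
  fixes V :: "'v set" and E d \<phi> I u
  assumes inv: "Inv V E d \<phi> I u"
begin

lemma entries: assumes "i \<in> I" "v \<in> V" shows "\<phi> v i \<in> {0, 1, -1, -2}"
proof -
  note F = inv_facts[OF inv]
  note f = pf[OF inv]
  have "index_coeffs V \<phi> i = type9 \<or> index_coeffs V \<phi> i = type5 \<or> index_coeffs V \<phi> i = type4 \<or> index_coeffs V \<phi> i = type7"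
    using F(10)[OF assms(1)] by simp
  then have "colinfo V \<phi> i 1 3 0 \<or> colinfo V \<phi> i 1 0 1 \<or> colinfo V \<phi> i 1 1 0 \<or> colinfo V \<phi> i 1 2 0"
    using colinfo9[OF f(1)] colinfo5[OF f(1)] colinfo4[OF f(1)] colinfo7[OF f(1)] by blast
  then show ?thesis using assms(2) unfolding colinfo_def by blast
qed

lemma base_struct:
  assumes a: "a \<in> I" "\<forall>i\<in>I. \<phi> u i = (if i = a then 1 else 0)"
    and t9: "index_coeffs V \<phi> a = type9"
  shows "\<exists>x y z. V = {u, x, y, z} \<and> x \<noteq> u \<and> y \<noteq> u \<and> z \<noteq> u \<and> x \<noteq> y \<and> x \<noteq> z \<and> y \<noteq> z \<and>
     E u x \<and> E u y \<and> E u z \<and> \<not> E x y \<and> \<not> E x z \<and> \<not> E y z \<and>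
     d x = -2 \<and> d y = -3 \<and> d z = -6"
proof -
  note F = inv_facts[OF inv]
  note f = pf[OF inv]
  have ua: "\<phi> u a = 1" using a by simp
  have N: "{v\<in>V. \<phi> v a = -1} = {v. E u v}"
  proof (rule set_eqI)
    fix v show "v \<in> {v\<in>V. \<phi> v a = -1} \<longleftrightarrow> v \<in> {v. E u v}"
      using nbr_iff[OF inv a, of v] ua by auto
  qed
  have c3: "card {v. E u v} = 3" using colinfo9[OF f(1) t9] N unfolding colinfo_def by simp
  obtain x where x: "x \<in> V" "\<phi> x a = -1" "d x = -2" using neg2_nbr[OF inv a] by blast
  have xu: "x \<noteq> u"
  proof
    assume "x = u" then show False using x(2) ua by simp
  qed
  have Eux: "E u x" using nbr_iff[OF inv a, of x] x(1,2) xu by simp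
  have finN: "finite {v. E u v}" using c3 card.infinite by fastforce
  have "card ({v. E u v} - {x}) = 2" using c3 Eux finN by simp
  then obtain y z where yz: "{v. E u v} - {x} = {y, z}" "y \<noteq> z" by (meson card_2_iff)
  have Nyz: "E u v \<longleftrightarrow> v = x \<or> v = y \<or> v = z" for v
  proof -
    have "E u v \<longleftrightarrow> v \<in> {v. E u v}" by simp
    also have "\<dots> \<longleftrightarrow> v = x \<or> v \<in> {v. E u v} - {x}" using Eux by blast
    also have "\<dots> \<longleftrightarrow> v = x \<or> v \<in> {y, z}" by (simp only: yz(1))
    finally show ?thesis by simp
  qed
  have yx: "y \<noteq> x" and zx: "z \<noteq> x"
  proof -
    have "y \<in> {v. E u v} - {x}" "z \<in> {v. E u v} - {x}" unfolding yz(1) by simp_all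
    then show "y \<noteq> x" "z \<noteq> x" by simp_all
  qed
  have Euy: "E u y" and Euz: "E u z" using Nyz by simp_all
  have yV: "y \<in> V" and zV: "z \<in> V" using f(3) Euy Euz by blast+
  have yu: "y \<noteq> u" and zu: "z \<noteq> u" using f(5) Euy Euz by metis+
  have ya: "\<phi> y a = -1" and za: "\<phi> z a = -1" using nbr_iff[OF inv a] Euy Euz by blast+
  have nxy: "\<not> E x y" using no_triangle[OF F(1) Eux Euy] yx by metis
  have nxz: "\<not> E x z" using no_triangle[OF F(1) Eux Euz] zx by metis
  have nyz: "\<not> E y z" using no_triangle[OF F(1) Euy Euz] yz(2) by metis
  have finI: "finite I" using F(2) .
  have finIa: "finite (I - {a})" using finI by simp
  have sqx: "(\<Sum>i\<in>I. \<phi> x i * \<phi> x i) = 2" using F(5)[OF x(1)] x(3) by (simp add: QI_def)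
  have smx: "(\<Sum>i\<in>I. \<phi> x i) = 0" using F(6)[OF x(1)] x(3) by simp
  have "(\<Sum>i\<in>I - {a}. \<phi> x i * \<phi> x i) = 1" using sqx sum_remove_int[OF finI a(1), of "\<lambda>i. \<phi> x i * \<phi> x i"] x(2) by simp
  moreover have "(\<Sum>i\<in>I - {a}. \<phi> x i) = 1" using smx sum_remove_int[OF finI a(1), of "\<phi> x"] x(2) by simp
  ultimately obtain b where b: "b \<in> I - {a}" "\<forall>i\<in>I - {a}. \<phi> x i = (if i = b then 1 else 0)"
    using unit_vec[OF finIa] by blast
  have bI: "b \<in> I" and ba: "b \<noteq> a" using b(1) by auto
  have xform: "\<forall>i\<in>I. \<phi> x i = (if i = a then -1 else if i = b then 1 else 0)"
    using b(2) x(2) ba by auto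
  have ub: "\<phi> u b = 0" using a bI ba by simp
  have QIx: "QI I (\<phi> x) (\<phi> w) = \<phi> w a - \<phi> w b" for w
    using sum_two_supp[OF finI a(1) bI ba[symmetric] xform] by (simp add: QI_def)
  have yb: "\<phi> y b = -1" using QIx[of y] F(4)[OF x(1) yV yx[symmetric]] nxy ya by simp
  have zb: "\<phi> z b = -1" using QIx[of z] F(4)[OF x(1) zV zx[symmetric]] nxz za by simp
  define R where "R = V - {u, x, y, z}"
  have Ra: "\<phi> v a = 0" if v: "v \<in> R" for v
  proof -
    have "v \<in> V" "v \<noteq> u" "\<not> E u v" using v Nyz unfolding R_def by auto
    then show ?thesis using nbr[OF inv a] by blast
  qed
  have b9: "index_coeffs V \<phi> b \<noteq> type9"
  proof
    assume "index_coeffs V \<phi> b = type9"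
    then have "b \<in> {i\<in>I. index_coeffs V \<phi> i = type9}" "a \<in> {i\<in>I. index_coeffs V \<phi> i = type9}"
      using bI a(1) t9 by simp_all
    moreover obtain i9 where "{i\<in>I. index_coeffs V \<phi> i = type9} = {i9}" using F(11) card_1_singletonE by blast
    ultimately show False using ba by simp
  qed
  have nm1b: "card {w\<in>V. \<phi> w b = -1} \<le> 2"
  proof -
    have "index_coeffs V \<phi> b \<in> {type5, type4, type7}" using F(10)[OF bI] b9 by simp
    then have "index_coeffs V \<phi> b = type5 \<or> index_coeffs V \<phi> b = type4 \<or> index_coeffs V \<phi> b = type7" by simp
    then show ?thesis
    proof (elim disjE)
      assume "index_coeffs V \<phi> b = type5"
      then show ?thesis using colinfo5[OF f(1)] unfolding colinfo_def by fastforce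
    next
      assume "index_coeffs V \<phi> b = type4"
      then show ?thesis using colinfo4[OF f(1)] unfolding colinfo_def by fastforce
    next
      assume "index_coeffs V \<phi> b = type7"
      then show ?thesis using colinfo7[OF f(1)] unfolding colinfo_def by fastforce
    qed
  qed
  have Rb: "\<phi> v b = 0" and nxv: "\<not> E x v" if v: "v \<in> R" for v
  proof -
    have vV: "v \<in> V" and vx: "v \<noteq> x" and vy: "v \<noteq> y" and vz: "v \<noteq> z" using v unfolding R_def by auto
    have q: "QI I (\<phi> x) (\<phi> v) = - \<phi> v b" using QIx[of v] Ra[OF v] by simp
    have q01: "- \<phi> v b = (if E x v then 1 else 0)" using q F(4)[OF x(1) vV vx[symmetric]] by simp
    have "\<phi> v b \<noteq> -1"
    proof
      assume vb: "\<phi> v b = -1"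
      have "{y, z, v} \<subseteq> {w\<in>V. \<phi> w b = -1}" using yV zV vV yb zb vb by blast
      moreover have "card {y, z, v} = 3" using yz(2) vy vz by simp
      moreover have "finite {w\<in>V. \<phi> w b = -1}" using f(1) by simp
      ultimately have "card {w\<in>V. \<phi> w b = -1} \<ge> 3" by (metis card_mono)
      then show False using nm1b by simp
    qed
    then show "\<phi> v b = 0" using q01 by (simp split: if_splits)
    then show "\<not> E x v" using q01 by (simp split: if_splits)
  qed
  obtain c where c: "\<forall>v\<in>V. c v > 0" "\<forall>i\<in>I. (\<Sum>v\<in>V. c v * real_of_int (\<phi> v i)) = 0"
    using kernel[OF inv] by blast
  define J where "J = I - {a, b}"
  have JI: "J \<subseteq> I" unfolding J_def by blast
  have sJ: "(\<Sum>i\<in>J. \<phi> w i * \<phi> v i) = (\<Sum>i\<in>I. \<phi> w i * \<phi> v i) - \<phi> w a * \<phi> v a - \<phi> w b * \<phi> v b" for w v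
    unfolding J_def using sum_remove2[OF finI a(1) bI ba[symmetric]] by blast
  have hw: "(\<Sum>i\<in>J. \<phi> w i * \<phi> v i) = - (if E w v then 1 else 0) + \<phi> v a + \<phi> v b"
    if w: "w \<in> V" "\<phi> w a = -1" "\<phi> w b = -1" and v: "v \<in> V" "v \<noteq> w" for w v
    using sJ[of w v] F(4)[OF w(1) v(1) v(2)[symmetric]] w(2,3) by (simp add: QI_def)
  have hww: "(\<Sum>i\<in>J. \<phi> w i * \<phi> w i) = - d w - 2"
    if w: "w \<in> V" "\<phi> w a = -1" "\<phi> w b = -1" for w
    using sJ[of w w] F(5)[OF w(1)] w(2,3) by (simp add: QI_def)
  have Eyu: "E y u" and Ezu: "E z u" using f(4) Euy Euz by blast+
  define k where "k v = (\<Sum>i\<in>J. (\<phi> y i + \<phi> z i) * \<phi> v i) + (d v + 2) - \<phi> v a - \<phi> v b" for v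
  have kh: "(\<Sum>i\<in>J. (\<phi> y i + \<phi> z i) * \<phi> v i) = (\<Sum>i\<in>J. \<phi> y i * \<phi> v i) + (\<Sum>i\<in>J. \<phi> z i * \<phi> v i)" for v
    by (simp add: distrib_right sum.distrib)
  have kother: "k v = - (if E y v then 1 else 0) - (if E z v then 1 else 0) + \<phi> v a + \<phi> v b + d v + 2"
    if v: "v \<in> V" "v \<noteq> y" "v \<noteq> z" for v
    unfolding k_def kh using hw[OF yV ya yb v(1,2)] hw[OF zV za zb v(1,3)] by simp
  have ky: "k y = 0"
    unfolding k_def kh using hww[OF yV ya yb] hw[OF zV za zb yV yz(2)] ya yb nyz f(4) by auto
  have kz: "k z = 0"
    unfolding k_def kh using hww[OF zV za zb] hw[OF yV ya yb zV yz(2)[symmetric]] za zb nyz by auto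
  have ku: "k u = 0" using kother[OF F(7) yu[symmetric] zu[symmetric]] Eyu Ezu ua ub F(8) by simp
  have kx: "k x = 0" using kother[OF x(1) yx[symmetric] zx[symmetric]] nxy nxz f(4) x(2,3) xform bI ba by auto
  have kR: "k v = - (if E y v then 1 else 0) - (if E z v then 1 else 0) + d v + 2" if v: "v \<in> R" for v
  proof -
    have "v \<in> V" "v \<noteq> y" "v \<noteq> z" using v unfolding R_def by auto
    then show ?thesis using kother Ra[OF v] Rb[OF v] by simp
  qed
  have kle: "\<forall>v\<in>V. - (c v * real_of_int (k v)) \<ge> 0"
  proof
    fix v assume vV: "v \<in> V"
    have "k v \<le> 0"
    proof (cases "v \<in> R")
      case True
      then have "v \<noteq> u" unfolding R_def by blast
      then show ?thesis using kR[OF True] d_le2[OF inv vV] by simp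
    next
      case False
      then have "v = u \<or> v = x \<or> v = y \<or> v = z" using vV unfolding R_def by blast
      then show ?thesis using ku kx ky kz by auto
    qed
    moreover have "c v > 0" using c(1) vV by blast
    ultimately have "c v * real_of_int (k v) \<le> 0" by (simp add: mult_nonneg_nonpos)
    then show "- (c v * real_of_int (k v)) \<ge> 0" by simp
  qed
  have ksum0: "(\<Sum>v\<in>V. c v * real_of_int (k v)) = 0"
  proof -
    have rk: "real_of_int (k v) = (\<Sum>i\<in>J. real_of_int (\<phi> y i + \<phi> z i) * real_of_int (\<phi> v i))
        + real_of_int (d v + 2) - real_of_int (\<phi> v a) - real_of_int (\<phi> v b)" for v
      unfolding k_def by simp
    have s1: "(\<Sum>v\<in>V. c v * (\<Sum>i\<in>J. real_of_int (\<phi> y i + \<phi> z i) * real_of_int (\<phi> v i))) = 0"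
    proof (rule ksum)
      show "\<forall>i\<in>J. (\<Sum>v\<in>V. c v * (real_of_int (\<phi> y i + \<phi> z i) * real_of_int (\<phi> v i))) = 0"
      proof
        fix i assume "i \<in> J"
        then have "i \<in> I" using JI by blast
        have "(\<Sum>v\<in>V. c v * (real_of_int (\<phi> y i + \<phi> z i) * real_of_int (\<phi> v i)))
            = real_of_int (\<phi> y i + \<phi> z i) * (\<Sum>v\<in>V. c v * real_of_int (\<phi> v i))"
          by (simp add: sum_distrib_left mult_ac)
        then show "(\<Sum>v\<in>V. c v * (real_of_int (\<phi> y i + \<phi> z i) * real_of_int (\<phi> v i))) = 0"
          using c(2) \<open>i \<in> I\<close> by simp
      qed
    qed
    have s2: "(\<Sum>v\<in>V. c v * real_of_int (d v + 2)) = 0" using kernel_d[OF inv c(2)] .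
    have s3: "(\<Sum>v\<in>V. c v * real_of_int (\<phi> v a)) = 0" using c(2) a(1) by blast
    have s4: "(\<Sum>v\<in>V. c v * real_of_int (\<phi> v b)) = 0" using c(2) bI by blast
    have "(\<Sum>v\<in>V. c v * real_of_int (k v)) =
        (\<Sum>v\<in>V. c v * (\<Sum>i\<in>J. real_of_int (\<phi> y i + \<phi> z i) * real_of_int (\<phi> v i)))
        + (\<Sum>v\<in>V. c v * real_of_int (d v + 2)) - (\<Sum>v\<in>V. c v * real_of_int (\<phi> v a))
        - (\<Sum>v\<in>V. c v * real_of_int (\<phi> v b))"
      unfolding rk by (simp add: sum.distrib sum_subtractf distrib_left right_diff_distrib)
    then show ?thesis using s1 s2 s3 s4 by simp
  qed
  have k0: "c v * real_of_int (k v) = 0" if "v \<in> V" for v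
  proof -
    have "(\<Sum>v\<in>V. - (c v * real_of_int (k v))) = 0" using ksum0 by (simp add: sum_negf)
    then have "- (c v * real_of_int (k v)) = 0"
      using sum_nonneg_zero_each[OF f(1), of "\<lambda>v. - (c v * real_of_int (k v))"] kle that by blast
    then show ?thesis by simp
  qed
  have noRy: "\<not> E y v" and noRz: "\<not> E z v" if v: "v \<in> R" for v
  proof -
    have vV: "v \<in> V" and vu: "v \<noteq> u" using v unfolding R_def by auto
    have "c v > 0" using c(1) vV by blast
    then have "k v = 0" using k0[OF vV] by simp
    then show "\<not> E y v" "\<not> E z v" using kR[OF v] d_le2[OF inv vV vu] by (auto split: if_splits)
  qed
  have VS: "V = {u, x, y, z}"
  proof
    show "{u, x, y, z} \<subseteq> V" using F(7) x(1) yV zV by blast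
    show "V \<subseteq> {u, x, y, z}"
    proof (rule closed_all[where E=E])
      show "\<And>p q. E p q \<Longrightarrow> p \<in> V \<and> q \<in> V" using f(3) .
      show "\<And>p q. p \<in> V \<Longrightarrow> q \<in> V \<Longrightarrow> E\<^sup>*\<^sup>* p q" using f(6) .
      show "u \<in> {u, x, y, z}" by simp
      show "u \<in> V" using F(7) .
      fix p q assume p: "p \<in> {u, x, y, z}" and pq: "E p q"
      show "q \<in> {u, x, y, z}"
      proof (rule ccontr)
        assume "q \<notin> {u, x, y, z}"
        then have qR: "q \<in> R" unfolding R_def using f(3) pq by blast
        have "p = u \<or> p = x \<or> p = y \<or> p = z" using p by simp
        then show False
        proof (elim disjE)
          assume "p = u" then show False using pq Nyz qR unfolding R_def by auto
        next
          assume "p = x" then show False using pq nxv[OF qR] by simp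
        next
          assume "p = y" then show False using pq noRy[OF qR] by simp
        next
          assume "p = z" then show False using pq noRz[OF qR] by simp
        qed
      qed
    qed
  qed
  have c4: "card V = 4" unfolding VS using xu yu zu yx zx yz(2) by simp
  have c3I: "card I = 3" using F(3) c4 by simp
  have cJ: "card J = 1"
  proof -
    have "{a, b} \<subseteq> I" using a(1) bI by blast
    moreover have "card {a, b} = 2" using ba by simp
    ultimately show ?thesis unfolding J_def using card_Diff_subset[of "{a, b}" I] c3I by simp
  qed
  then obtain j where j: "J = {j}" using card_1_singletonE by blast
  have jI: "j \<in> I" using j JI by blast
  have yzj: "\<phi> y j * \<phi> z j = -2"
    using hw[OF yV ya yb zV yz(2)[symmetric]] nyz za zb j by simp
  have yj: "\<phi> y j * \<phi> y j = - d y - 2" using hww[OF yV ya yb] j by simp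
  have zj: "\<phi> z j * \<phi> z j = - d z - 2" using hww[OF zV za zb] j by simp
  have ey: "\<phi> y j \<in> {0, 1, -1, -2}" using entries[OF jI yV] .
  have ez: "\<phi> z j \<in> {0, 1, -1, -2}" using entries[OF jI zV] .
  have "(\<phi> y j = 1 \<and> \<phi> z j = -2) \<or> (\<phi> y j = -2 \<and> \<phi> z j = 1)"
    using ey ez yzj by auto
  then show ?thesis
  proof
    assume h: "\<phi> y j = 1 \<and> \<phi> z j = -2"
    then have "d y = -3" "d z = -6" using yj zj by simp_all
    then show ?thesis using VS xu yu zu yx zx yz(2) Eux Euy Euz nxy nxz nyz x(3) by blast
  next
    assume h: "\<phi> y j = -2 \<and> \<phi> z j = 1"
    then have "d y = -6" "d z = -3" using yj zj by simp_all
    moreover have "V = {u, x, z, y}" using VS by blast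
    moreover have "\<not> E z y" using nyz f(4) by blast
    ultimately show ?thesis using xu yu zu yx zx yz(2) Eux Euy Euz nxy nxz x(3) by blast
  qed
qed
end


definition Ciso :: "'v set \<Rightarrow> ('v \<Rightarrow> 'v \<Rightarrow> bool) \<Rightarrow> ('v \<Rightarrow> int) \<Rightarrow> 'v \<Rightarrow> bool" where
  "Ciso V E d u \<longleftrightarrow> (\<exists>m E' d' f. cgen m E' d' (f u) \<and> bij_betw f V {0..<m} \<and>
      (\<forall>p\<in>V. \<forall>q\<in>V. E p q \<longleftrightarrow> E' (f p) (f q)) \<and> (\<forall>p\<in>V. d p = d' (f p)))"

lemma base_iso:
  assumes V: "V = {u, x, y, z}" and ne: "x \<noteq> u" "y \<noteq> u" "z \<noteq> u" "x \<noteq> y" "x \<noteq> z" "y \<noteq> z"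
    and sym: "\<And>p q. E p q \<Longrightarrow> E q p" and irr: "\<And>p. \<not> E p p"
    and e: "E u x" "E u y" "E u z" "\<not> E x y" "\<not> E x z" "\<not> E y z"
    and dv: "d u = -1" "d x = -2" "d y = -3" "d z = -6"
  shows "Ciso V E d u"
proof -
  define f where "f v = (if v = u then 0 else if v = x then 1 else if v = z then 2 else (3::nat))" for v
  have fu: "f u = 0" and fx: "f x = 1" and fz: "f z = 2" and fy: "f y = 3"
    using ne unfolding f_def by auto
  have cg: "cgen 4 Tc_E Tc_d (f u)" using fu cgen.base by simp
  have img: "f ` V = {0..<4}"
  proof -
    have "f ` V = {0, 1, 3, 2}" unfolding V using fu fx fy fz by simp
    also have "\<dots> = {0..<4}" by auto
    finally show ?thesis .
  qed
  have inj: "inj_on f V" unfolding V using fu fx fy fz ne by auto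
  have bij: "bij_betw f V {0..<4}" using inj img unfolding bij_betw_def by blast
  have edges: "\<forall>p\<in>V. \<forall>q\<in>V. E p q \<longleftrightarrow> Tc_E (f p) (f q)"
  proof (intro ballI)
    fix p q assume p: "p \<in> V" and q: "q \<in> V"
    have ex: "E x u" "E y u" "E z u" "\<not> E y x" "\<not> E z x" "\<not> E z y" using e sym by blast+
    show "E p q \<longleftrightarrow> Tc_E (f p) (f q)"
      using p q unfolding V using fu fx fy fz e ex irr by (auto simp: Tc_E_def)
  qed
  have decs: "\<forall>p\<in>V. d p = Tc_d (f p)"
    unfolding V using fu fx fy fz dv by (auto simp: Tc_d_def)
  show ?thesis unfolding Ciso_def using cg bij edges decs by blast
qed

lemma bij_ext:
  assumes bij: "bij_betw f (V - {u}) {0..<m}" and uV: "u \<in> V"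
  shows "bij_betw (f(u := m)) V {0..<Suc m}"
proof -
  have Vi: "V = insert u (V - {u})" using uV by blast
  have injf: "inj_on f (V - {u})" using bij unfolding bij_betw_def by blast
  have "inj_on (f(u := m)) (V - {u}) = inj_on f (V - {u})" by (rule inj_on_cong) simp
  then have inj0: "inj_on (f(u := m)) (V - {u})" using injf by simp
  have im0: "(f(u := m)) ` (V - {u}) = {0..<m}"
    using bij unfolding bij_betw_def by (auto simp: image_def)
  have "inj_on (f(u := m)) V"
    by (subst Vi, simp only: inj_on_insert) (use inj0 im0 in auto)
  moreover have "(f(u := m)) ` V = {0..<Suc m}"
  proof -
    have "(f(u := m)) ` V = (f(u := m)) ` (insert u (V - {u}))" using Vi by simp
    also have "\<dots> = insert m ((f(u := m)) ` (V - {u}))" by (simp only: image_insert fun_upd_same)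
    also have "\<dots> = insert m {0..<m}" using im0 by simp
    also have "\<dots> = {0..<Suc m}" by auto
    finally show ?thesis .
  qed
  ultimately show ?thesis unfolding bij_betw_def by blast
qed

lemma ext_vertex:
  assumes cg: "cgen m E2 d2 (f x)" and bij: "bij_betw f (V - {u}) {0..<m}" and uV: "u \<in> V"
    and xV: "x \<in> V" "x \<noteq> u"
    and edges: "\<forall>p\<in>V - {u}. \<forall>q\<in>V - {u}. E p q \<longleftrightarrow> E2 (f p) (f q)"
    and Eu: "\<And>q. E u q \<longleftrightarrow> q = x" and sym: "\<And>p q. E p q \<Longrightarrow> E q p"
    and dd: "\<forall>p\<in>V - {u}. p \<noteq> x \<longrightarrow> d p = d2 (f p)" and dx: "d x = d2 (f x) - 1" and du: "d u = -1"
  shows "Ciso V E d u"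
proof -
  define F where "F = f(u := m)"
  define E3 where "E3 = (\<lambda>a b. E2 a b \<or> {a, b} = {f x, m})"
  define d3 where "d3 = d2(f x := d2 (f x) - 1, m := -1)"
  have cg3: "cgen (Suc m) E3 d3 (F u)" unfolding E3_def d3_def F_def using cgen.blowup_vertex[OF cg] by simp
  have bij3: "bij_betw F V {0..<Suc m}" unfolding F_def using bij_ext[OF bij uV] .
  have bnd: "\<And>a b. E2 a b \<Longrightarrow> a < m \<and> b < m" using cgen_bounds[OF cg] by blast
  have flt: "f p < m" if "p \<in> V - {u}" for p using bij that unfolding bij_betw_def by auto
  have finj: "f p = f q \<longleftrightarrow> p = q" if "p \<in> V - {u}" "q \<in> V - {u}" for p q
    using bij that unfolding bij_betw_def inj_on_def by blast
  have Fp: "F p = f p" if "p \<noteq> u" for p using that unfolding F_def by simp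
  have Fu: "F u = m" unfolding F_def by simp
  have xV': "x \<in> V - {u}" using xV by blast
  have edges3: "\<forall>p\<in>V. \<forall>q\<in>V. E p q \<longleftrightarrow> E3 (F p) (F q)"
  proof (intro ballI)
    fix p q assume p: "p \<in> V" and q: "q \<in> V"
    show "E p q \<longleftrightarrow> E3 (F p) (F q)"
    proof (cases "p = u")
      case True
      then have pu: "p = u" .
      show ?thesis
      proof (cases "q = u")
        case True
        have "\<not> E u u" using Eu[of u] xV(2) by simp
        moreover have "\<not> E2 m m" using bnd by blast
        moreover have "{m, m} \<noteq> {f x, m}" using flt[OF xV'] by auto
        ultimately show ?thesis using pu True Fu unfolding E3_def by simp
      next
        case False
        have q': "q \<in> V - {u}" using q False by blast
        have "\<not> E2 m (f q)" using bnd by blast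
        moreover have "{m, f q} = {f x, m} \<longleftrightarrow> q = x"
          using finj[OF q' xV'] flt[OF q'] flt[OF xV'] by (auto simp: doubleton_eq_iff)
        ultimately show ?thesis using pu Eu Fu Fp[OF False] unfolding E3_def by simp
      qed
    next
      case False
      have p': "p \<in> V - {u}" using p False by blast
      show ?thesis
      proof (cases "q = u")
        case True
        have "\<not> E2 (f p) m" using bnd by blast
        moreover have "{f p, m} = {f x, m} \<longleftrightarrow> p = x"
          using finj[OF p' xV'] flt[OF p'] flt[OF xV'] by (auto simp: doubleton_eq_iff)
        moreover have "E p u \<longleftrightarrow> p = x" using Eu sym by blast
        ultimately show ?thesis using True Fu Fp[OF False] unfolding E3_def by simp
      next
        case qF: False
        have q': "q \<in> V - {u}" using q qF by blast
        have "{f p, f q} \<noteq> {f x, m}" using flt[OF p'] flt[OF q'] by (auto simp: doubleton_eq_iff)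
        then show ?thesis using edges p' q' Fp[OF False] Fp[OF qF] unfolding E3_def by simp
      qed
    qed
  qed
  have decs3: "\<forall>p\<in>V. d p = d3 (F p)"
  proof
    fix p assume p: "p \<in> V"
    show "d p = d3 (F p)"
    proof (cases "p = u")
      case True then show ?thesis using du Fu unfolding d3_def by simp
    next
      case False
      have p': "p \<in> V - {u}" using p False by blast
      have "f p \<noteq> m" using flt[OF p'] by simp
      then show ?thesis using dd p' dx Fp[OF False] finj[OF p' xV'] unfolding d3_def by auto
    qed
  qed
  show ?thesis unfolding Ciso_def using cg3 bij3 edges3 decs3 by blast
qed


lemma ext_edge:
  assumes cg: "cgen m E2 d2 (f x)" and bij: "bij_betw f (V - {u}) {0..<m}" and uV: "u \<in> V"
    and xV: "x \<in> V" "x \<noteq> u" and yV: "y \<in> V" "y \<noteq> u" and xy: "x \<noteq> y"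
    and edges: "\<forall>p\<in>V - {u}. \<forall>q\<in>V - {u}. (E p q \<or> {p, q} = {x, y}) \<longleftrightarrow> E2 (f p) (f q)"
    and nxy: "\<not> E x y"
    and Eu: "\<And>q. E u q \<longleftrightarrow> q = x \<or> q = y" and sym: "\<And>p q. E p q \<Longrightarrow> E q p"
    and dd: "\<forall>p\<in>V - {u}. p \<noteq> x \<longrightarrow> p \<noteq> y \<longrightarrow> d p = d2 (f p)"
    and dx: "d x = d2 (f x) - 1" and dy: "d y = d2 (f y) - 1" and du: "d u = -1"
  shows "Ciso V E d u"
proof -
  define F where "F = f(u := m)"
  define E3 where "E3 = (\<lambda>a b. (E2 a b \<and> {a, b} \<noteq> {f x, f y}) \<or> {a, b} = {f x, m} \<or> {a, b} = {f y, m})"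
  define d3 where "d3 = d2(f x := d2 (f x) - 1, f y := d2 (f y) - 1, m := -1)"
  have xV': "x \<in> V - {u}" and yV': "y \<in> V - {u}" using xV yV by blast+
  have "E2 (f x) (f y)" using edges xV' yV' by blast
  then have cg3: "cgen (Suc m) E3 d3 (F u)" unfolding E3_def d3_def F_def using cgen.blowup_edge[OF cg] by simp
  have bij3: "bij_betw F V {0..<Suc m}" unfolding F_def using bij_ext[OF bij uV] .
  have bnd: "\<And>a b. E2 a b \<Longrightarrow> a < m \<and> b < m" using cgen_bounds[OF cg] by blast
  have flt: "f p < m" if "p \<in> V - {u}" for p using bij that unfolding bij_betw_def by auto
  have finj: "f p = f q \<longleftrightarrow> p = q" if "p \<in> V - {u}" "q \<in> V - {u}" for p q
    using bij that unfolding bij_betw_def inj_on_def by blast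
  have Fp: "F p = f p" if "p \<noteq> u" for p using that unfolding F_def by simp
  have Fu: "F u = m" unfolding F_def by simp
  have fxm: "f x < m" "f y < m" using flt xV' yV' by blast+
  have fxy: "f x \<noteq> f y" using finj[OF xV' yV'] xy by simp
  have edges3: "\<forall>p\<in>V. \<forall>q\<in>V. E p q \<longleftrightarrow> E3 (F p) (F q)"
  proof (intro ballI)
    fix p q assume p: "p \<in> V" and q: "q \<in> V"
    show "E p q \<longleftrightarrow> E3 (F p) (F q)"
    proof (cases "p = u")
      case True
      then have pu: "p = u" .
      show ?thesis
      proof (cases "q = u")
        case True
        have "\<not> E u u" using Eu[of u] xV(2) yV(2) by simp
        moreover have "\<not> E2 m m" using bnd by blast
        moreover have "{m, m} \<noteq> {f x, m}" "{m, m} \<noteq> {f y, m}" using fxm by auto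
        ultimately show ?thesis using pu True Fu unfolding E3_def by simp
      next
        case False
        have q': "q \<in> V - {u}" using q False by blast
        have "\<not> E2 m (f q)" using bnd by blast
        moreover have "{m, f q} = {f x, m} \<longleftrightarrow> q = x"
          using finj[OF q' xV'] flt[OF q'] fxm by (auto simp: doubleton_eq_iff)
        moreover have "{m, f q} = {f y, m} \<longleftrightarrow> q = y"
          using finj[OF q' yV'] flt[OF q'] fxm by (auto simp: doubleton_eq_iff)
        ultimately show ?thesis using pu Eu Fu Fp[OF False] unfolding E3_def by simp
      qed
    next
      case False
      have p': "p \<in> V - {u}" using p False by blast
      show ?thesis
      proof (cases "q = u")
        case True
        have "\<not> E2 (f p) m" using bnd by blast
        moreover have "{f p, m} = {f x, m} \<longleftrightarrow> p = x"
          using finj[OF p' xV'] flt[OF p'] fxm by (auto simp: doubleton_eq_iff)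
        moreover have "{f p, m} = {f y, m} \<longleftrightarrow> p = y"
          using finj[OF p' yV'] flt[OF p'] fxm by (auto simp: doubleton_eq_iff)
        moreover have "E p u \<longleftrightarrow> p = x \<or> p = y" using Eu sym by blast
        ultimately show ?thesis using True Fu Fp[OF False] unfolding E3_def by simp
      next
        case qF: False
        have q': "q \<in> V - {u}" using q qF by blast
        have n1: "{f p, f q} \<noteq> {f x, m}" "{f p, f q} \<noteq> {f y, m}"
          using flt[OF p'] flt[OF q'] by (auto simp: doubleton_eq_iff)
        have n2: "{f p, f q} = {f x, f y} \<longleftrightarrow> {p, q} = {x, y}"
          using finj[OF p' xV'] finj[OF p' yV'] finj[OF q' xV'] finj[OF q' yV']
          by (auto simp: doubleton_eq_iff)
        have n3: "E p q \<Longrightarrow> {p, q} \<noteq> {x, y}" using nxy sym by (auto simp: doubleton_eq_iff)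
        have "E p q \<longleftrightarrow> (E p q \<or> {p, q} = {x, y}) \<and> {p, q} \<noteq> {x, y}" using n3 by blast
        also have "\<dots> \<longleftrightarrow> E2 (f p) (f q) \<and> {f p, f q} \<noteq> {f x, f y}" using edges p' q' n2 by blast
        finally show ?thesis using n1 Fp[OF False] Fp[OF qF] unfolding E3_def by simp
      qed
    qed
  qed
  have decs3: "\<forall>p\<in>V. d p = d3 (F p)"
  proof
    fix p assume p: "p \<in> V"
    show "d p = d3 (F p)"
    proof (cases "p = u")
      case True then show ?thesis using du Fu unfolding d3_def by simp
    next
      case False
      have p': "p \<in> V - {u}" using p False by blast
      have "f p \<noteq> m" using flt[OF p'] by simp
      then show ?thesis using dd p' dx dy fxy Fp[OF False] finj[OF p' xV'] finj[OF p' yV'] unfolding d3_def by auto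
    qed
  qed
  show ?thesis unfolding Ciso_def using cg3 bij3 edges3 decs3 by blast
qed


lemma main: "Inv V E d \<phi> I u \<Longrightarrow> Ciso V E d u"
proof (induction "card V" arbitrary: V E d \<phi> I u rule: less_induct)
  case less
  note inv = less.prems
  note F = inv_facts[OF inv]
  note f = pf[OF inv]
  obtain a where a: "a \<in> I" "\<forall>i\<in>I. \<phi> u i = (if i = a then 1 else 0)" using u_form[OF inv] by blast
  have ua: "\<phi> u a = 1" using a by simp
  show ?case
  proof (cases "index_coeffs V \<phi> a = type9")
    case True
    obtain x y z where s: "V = {u, x, y, z}" "x \<noteq> u" "y \<noteq> u" "z \<noteq> u" "x \<noteq> y" "x \<noteq> z" "y \<noteq> z"
      "E u x" "E u y" "E u z" "\<not> E x y" "\<not> E x z" "\<not> E y z" "d x = -2" "d y = -3" "d z = -6"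
      using base_struct[OF inv a True] by blast
    show ?thesis using base_iso[OF s(1-7) f(4) f(5) s(8-13) F(8) s(14-16)] .
  next
    case False
    obtain x where x: "x \<in> V" "\<phi> x a = -1" "d x = -2" using neg2_nbr[OF inv a] by blast
    define d' where "d' v = d v + \<phi> v a * \<phi> v a" for v
    have inv': "Inv (V - {u}) (bd E u) d' \<phi> (I - {a}) x"
      using step_inv[OF inv a False x] unfolding d'_def by simp
    have "card (V - {u}) < card V" using card_Diff1_less[OF f(1) F(7)] .
    then have "Ciso (V - {u}) (bd E u) d' x" using less.hyps inv' by blast
    then obtain m E2 d2 g where cg: "cgen m E2 d2 (g x)" and bij: "bij_betw g (V - {u}) {0..<m}"
      and ed: "\<forall>p\<in>V - {u}. \<forall>q\<in>V - {u}. bd E u p q \<longleftrightarrow> E2 (g p) (g q)"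
      and dd: "\<forall>p\<in>V - {u}. d' p = d2 (g p)"
      unfolding Ciso_def by blast
    have xu: "x \<noteq> u"
    proof
      assume "x = u" then show False using x(2) ua by simp
    qed
    have Eux: "E u x" using nbr_iff[OF inv a, of x] x(1,2) xu by simp
    have N: "{v\<in>V. \<phi> v a = -1} = {v. E u v}"
    proof (rule set_eqI)
      fix v show "v \<in> {v\<in>V. \<phi> v a = -1} \<longleftrightarrow> v \<in> {v. E u v}"
        using nbr_iff[OF inv a, of v] ua by auto
    qed
    have dnon: "d p = d2 (g p)" if "p \<in> V - {u}" "\<not> E u p" for p
    proof -
      have "\<phi> p a = 0" using nbr[OF inv a, of p] that by auto
      moreover have "d' p = d2 (g p)" using dd that(1) by blast
      ultimately show ?thesis unfolding d'_def by simp
    qed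
    have dnb: "d p = d2 (g p) - 1" if "p \<in> V - {u}" "E u p" for p
    proof -
      have "\<phi> p a = -1" using nbr_iff[OF inv a, of p] that by auto
      moreover have "d' p = d2 (g p)" using dd that(1) by blast
      ultimately show ?thesis unfolding d'_def by simp
    qed
    have ta5: "index_coeffs V \<phi> a \<noteq> type5" using col_a_type[OF inv a] .
    have tya: "index_coeffs V \<phi> a = type4 \<or> index_coeffs V \<phi> a = type7"
      using F(10)[OF a(1)] False ta5 by simp
    have xV': "x \<in> V - {u}" using x(1) xu by blast
    show ?thesis
    proof (cases "index_coeffs V \<phi> a = type4")
      case True
      have "card {v. E u v} = 1" using colinfo4[OF f(1) True] N unfolding colinfo_def by simp
      then obtain z where z: "{v. E u v} = {z}" using card_1_singletonE by blast
      have zi: "E u v \<longleftrightarrow> v = z" for v using z by (metis mem_Collect_eq singleton_iff)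
      have "x = z" using zi[of x] Eux by simp
      then have Eu: "E u q \<longleftrightarrow> q = x" for q using zi by simp
      have edges: "\<forall>p\<in>V - {u}. \<forall>q\<in>V - {u}. E p q \<longleftrightarrow> E2 (g p) (g q)"
      proof (intro ballI)
        fix p q assume p: "p \<in> V - {u}" and q: "q \<in> V - {u}"
        have "bd E u p q \<longleftrightarrow> E p q" using p q Eu unfolding bd_def by auto
        then show "E p q \<longleftrightarrow> E2 (g p) (g q)" using ed p q by blast
      qed
      have ddn: "\<forall>p\<in>V - {u}. p \<noteq> x \<longrightarrow> d p = d2 (g p)" using dnon Eu by blast
      have dx: "d x = d2 (g x) - 1" using dnb[OF xV' Eux] .
      show ?thesis using ext_vertex[OF cg bij F(7) x(1) xu edges Eu f(4) ddn dx F(8)] .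
    next
      case False
      then have t7: "index_coeffs V \<phi> a = type7" using tya by blast
      have "card {v. E u v} = 2" using colinfo7[OF f(1) t7] N unfolding colinfo_def by simp
      then obtain p q where pq: "{v. E u v} = {p, q}" "p \<noteq> q" by (meson card_2_iff)
      have pqi: "E u v \<longleftrightarrow> v = p \<or> v = q" for v
      proof -
        have "E u v \<longleftrightarrow> v \<in> {v. E u v}" by simp
        also have "\<dots> \<longleftrightarrow> v \<in> {p, q}" by (simp only: pq(1))
        finally show ?thesis by simp
      qed
      define y where "y = (if x = p then q else p)"
      have xpq: "x = p \<or> x = q" using pqi[of x] Eux by simp
      have yx: "y \<noteq> x" using xpq pq(2) unfolding y_def by auto
      have Euy: "E u y" using pqi[of y] unfolding y_def by simp
      have Eu: "E u v \<longleftrightarrow> v = x \<or> v = y" for v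
        using pqi[of v] xpq pq(2) unfolding y_def by auto
      have yV: "y \<in> V" and yu: "y \<noteq> u" using f(3,5) Euy by metis+
      have yV': "y \<in> V - {u}" using yV yu by blast
      have nxy: "\<not> E x y" using no_triangle[OF F(1) Eux Euy] yx by metis
      have edges: "\<forall>p\<in>V - {u}. \<forall>q\<in>V - {u}. (E p q \<or> {p, q} = {x, y}) \<longleftrightarrow> E2 (g p) (g q)"
      proof (intro ballI)
        fix p q assume p: "p \<in> V - {u}" and q: "q \<in> V - {u}"
        have "(p \<noteq> q \<and> E u p \<and> E u q) \<longleftrightarrow> {p, q} = {x, y}"
          using Eu yx by (auto simp: doubleton_eq_iff)
        then have "bd E u p q \<longleftrightarrow> E p q \<or> {p, q} = {x, y}" using p q unfolding bd_def by blast
        then show "(E p q \<or> {p, q} = {x, y}) \<longleftrightarrow> E2 (g p) (g q)" using ed p q by blast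
      qed
      have ddn: "\<forall>p\<in>V - {u}. p \<noteq> x \<longrightarrow> p \<noteq> y \<longrightarrow> d p = d2 (g p)" using dnon Eu by blast
      have dx: "d x = d2 (g x) - 1" using dnb[OF xV' Eux] .
      have dy: "d y = d2 (g y) - 1" using dnb[OF yV' Euy] .
      show ?thesis using ext_edge[OF cg bij F(7) x(1) xu yV yu yx[symmetric] edges nxy Eu f(4) ddn dx dy F(8)] .
    qed
  qed
qed


theorem theorem3p13:
  fixes V :: "'v set" and E :: "'v \<Rightarrow> 'v \<Rightarrow> bool" and d :: "'v \<Rightarrow> int"
    and \<phi> :: "'v \<Rightarrow> nat \<Rightarrow> int"
  assumes tree: "plumbing_tree V E"
    and minimal: "minimal_tree V d"
    and emb: "symplectic_embedding V E d \<phi>"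
    and t9: "card {i. i < card V \<and> index_coeffs V \<phi> i = type9} = 1"
    and t5: "card {i. i < card V \<and> index_coeffs V \<phi> i = type5} = 1"
    and t2: "card {i. i < card V \<and> index_coeffs V \<phi> i = type2} = 1"
    and rest: "\<forall>i < card V. index_coeffs V \<phi> i \<in> {type9, type5, type2, type4, type7}"
  shows "in_C V E d"
proof -
  define n where "n = card V"
  note f = pt_facts[OF tree]
  have gram: "\<forall>v1\<in>V. \<forall>v2\<in>V. v1 \<noteq> v2 \<longrightarrow> Qn n (\<phi> v1) (\<phi> v2) = (if E v1 v2 then 1 else 0)"
    and self: "\<forall>v\<in>V. Qn n (\<phi> v) (\<phi> v) = d v"
    and Kc: "\<forall>v\<in>V. Qn n (\<phi> v) Kvec + Qn n (\<phi> v) (\<phi> v) = -2"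
    using emb unfolding symplectic_embedding_def Let_def n_def by blast+
  have QnQI: "Qn n x y = QI {..<n} x y" for x y unfolding Qn_def QI_def by simp
  have Ksum: "(\<Sum>i<n. \<phi> v i) = d v + 2" if "v \<in> V" for v
    using Kc self that unfolding Qn_def Kvec_def by force
  obtain i2 where i2s: "{i. i < n \<and> index_coeffs V \<phi> i = type2} = {i2}"
    using t2 card_1_singletonE unfolding n_def by blast
  have i2n: "i2 < n" and ti2: "index_coeffs V \<phi> i2 = type2" using i2s by auto
  have ci2: "colinfo V \<phi> i2 0 1 0" using colinfo2[OF f(1) ti2] .
  obtain w where ws: "{v\<in>V. \<phi> v i2 = -1} = {w}"
    using ci2 card_1_singletonE unfolding colinfo_def by blast
  have wV: "w \<in> V" and wi2: "\<phi> w i2 = -1" using ws by auto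
  have col2: "\<phi> v i2 = (if v = w then -1 else 0)" if v: "v \<in> V" for v
  proof -
    have e: "\<phi> v i2 \<in> {0, 1, -1, -2}" using ci2 v unfolding colinfo_def by blast
    have fin1: "finite {v\<in>V. \<phi> v i2 = 1}" "finite {v\<in>V. \<phi> v i2 = -2}" using f(1) by simp_all
    have "{v\<in>V. \<phi> v i2 = 1} = {}" "{v\<in>V. \<phi> v i2 = -2} = {}"
      using ci2 fin1 unfolding colinfo_def by simp_all
    then have n12: "\<phi> v i2 \<noteq> 1" "\<phi> v i2 \<noteq> -2" using v by blast+
    have "\<phi> v i2 = -1 \<longleftrightarrow> v = w"
    proof -
      have "\<phi> v i2 = -1 \<longleftrightarrow> v \<in> {v\<in>V. \<phi> v i2 = -1}" using v by simp
      also have "\<dots> \<longleftrightarrow> v = w" by (simp only: ws) simp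
      finally show ?thesis .
    qed
    then show ?thesis using e n12 by auto
  qed
  define I where "I = {..<n} - {i2}"
  have finI: "finite I" unfolding I_def by simp
  have QII: "QI I x y = QI {..<n} x y + x i2 * y i2" for x y
    unfolding I_def using QI_remove[of "{..<n}" i2 x y] i2n by simp
  have gramI: "QI I (\<phi> v1) (\<phi> v2) = (if E v1 v2 then 1 else 0)"
    if "v1 \<in> V" "v2 \<in> V" "v1 \<noteq> v2" for v1 v2
  proof -
    have "\<phi> v1 i2 * \<phi> v2 i2 = 0" using col2[OF that(1)] col2[OF that(2)] that(3) by auto
    then show ?thesis using QII gram that QnQI by simp
  qed
  have selfI: "QI I (\<phi> v) (\<phi> v) = d v + (if v = w then 1 else 0)" if "v \<in> V" for v
    using QII self that QnQI col2[OF that] by simp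
  have KI: "(\<Sum>i\<in>I. \<phi> v i) = d v + 2 + (if v = w then 1 else 0)" if "v \<in> V" for v
  proof -
    have "(\<Sum>i\<in>I. \<phi> v i) = (\<Sum>i<n. \<phi> v i) - \<phi> v i2"
      unfolding I_def using sum_remove_int[of "{..<n}" i2 "\<phi> v"] i2n by simp
    then show ?thesis using Ksum[OF that] col2[OF that] by simp
  qed
  have dle: "d v \<le> -2" if v: "v \<in> V" for v
  proof -
    have dv: "d v = - (\<Sum>i<n. \<phi> v i * \<phi> v i)" using self v unfolding Qn_def by simp
    have nn: "(\<Sum>i<n. \<phi> v i * \<phi> v i) \<ge> 0" by (intro sum_nonneg) simp
    have "(\<Sum>i<n. \<phi> v i * \<phi> v i) \<noteq> 0"
    proof
      assume z: "(\<Sum>i<n. \<phi> v i * \<phi> v i) = 0"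
      then have "\<forall>i\<in>{..<n}. \<phi> v i * \<phi> v i = 0"
        using sum_nonneg_eq_0_iff[of "{..<n}" "\<lambda>i. \<phi> v i * \<phi> v i"] by simp
      then have "(\<Sum>i<n. \<phi> v i) = 0" by simp
      then show False using Ksum[OF v] dv z by simp
    qed
    moreover have "d v \<noteq> -1" using minimal v unfolding minimal_tree_def by blast
    ultimately show ?thesis using dv nn by linarith
  qed
  have cardI: "card I + 1 = card V"
  proof -
    have "card I = n - 1" unfolding I_def using i2n by simp
    then show ?thesis using i2n unfolding n_def by simp
  qed
  obtain c where c: "\<forall>v\<in>V. c v > 0" "\<forall>i\<in>I. (\<Sum>v\<in>V. c v * real_of_int (\<phi> v i)) = 0"
  proof -
    have ip: "(\<Sum>i\<in>I. real_of_int (\<phi> v i) * real_of_int (\<phi> w' i)) = - real_of_int (QI I (\<phi> v) (\<phi> w'))" for v w'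
      by (simp add: QI_def)
    have "\<exists>c. (\<forall>v\<in>V. c v > 0) \<and> (\<forall>i\<in>I. (\<Sum>v\<in>V. c v * real_of_int (\<phi> v i)) = 0)"
    proof (rule kernel_pos[where E=E])
      show "finite V" using f(1) .
      show "finite I" using finI .
      show "card I < card V" using cardI by simp
      show "\<And>a b. E a b \<Longrightarrow> a \<in> V \<and> b \<in> V" using f(3) .
      show "\<And>a b. a \<in> V \<Longrightarrow> b \<in> V \<Longrightarrow> E\<^sup>*\<^sup>* a b" using f(6) .
      show "\<And>v w'. v \<in> V \<Longrightarrow> w' \<in> V \<Longrightarrow> v \<noteq> w' \<Longrightarrow> (\<Sum>i\<in>I. real_of_int (\<phi> v i) * real_of_int (\<phi> w' i)) \<le> 0"
        using ip gramI by simp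
      show "\<And>v w'. E v w' \<Longrightarrow> (\<Sum>i\<in>I. real_of_int (\<phi> v i) * real_of_int (\<phi> w' i)) < 0"
      proof -
        fix v w' assume e: "E v w'"
        then have "v \<noteq> w'" "v \<in> V" "w' \<in> V" using f(3,5) by metis+
        then show "(\<Sum>i\<in>I. real_of_int (\<phi> v i) * real_of_int (\<phi> w' i)) < 0"
          using ip gramI e by simp
      qed
    qed
    then show ?thesis using that by blast
  qed
  define t where "t v = real_of_int (d v + 2 + (if v = w then 1 else 0))" for v
  have st: "(\<Sum>v\<in>V. c v * t v) = 0"
  proof -
    have "(\<Sum>v\<in>V. c v * t v) = (\<Sum>v\<in>V. c v * (\<Sum>i\<in>I. real_of_int (\<phi> v i)))"
      unfolding t_def using KI by (intro sum.cong) (auto simp flip: of_int_sum)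
    also have "\<dots> = 0" by (rule ksum[OF c(2)])
    finally show ?thesis .
  qed
  obtain i5 where i5s: "{i. i < n \<and> index_coeffs V \<phi> i = type5} = {i5}"
    using t5 card_1_singletonE unfolding n_def by blast
  have i5n: "i5 < n" and ti5: "index_coeffs V \<phi> i5 = type5" using i5s by auto
  have "card {v\<in>V. \<phi> v i5 = -2} = 1" using colinfo5[OF f(1) ti5] unfolding colinfo_def by blast
  then obtain q where qs: "{v\<in>V. \<phi> v i5 = -2} = {q}" using card_1_singletonE by blast
  have qV: "q \<in> V" and qi: "\<phi> q i5 = -2" using qs by auto
  have "\<phi> q i5 * \<phi> q i5 \<le> (\<Sum>i<n. \<phi> q i * \<phi> q i)"
    using member_le_sum[of i5 "{..<n}" "\<lambda>i. \<phi> q i * \<phi> q i"] i5n by simp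
  moreover have "d q = - (\<Sum>i<n. \<phi> q i * \<phi> q i)" using self qV unfolding Qn_def by simp
  ultimately have dq: "d q \<le> -4" using qi by simp
  have "d q + 2 + (if q = w then 1 else 0) < 0" using dq by (cases "q = w") simp_all
  then have "t q < 0" unfolding t_def by linarith
  then obtain v where v: "v \<in> V" "t v > 0" using exists_pos[OF f(1) c(1) st qV] by blast
  have vw: "v = w" and dw: "d w = -2"
  proof -
    have "d v + 2 + (if v = w then 1 else 0) > 0" using v(2) unfolding t_def by simp
    then show "v = w" using dle[OF v(1)] by (auto split: if_splits)
    then show "d w = -2" using dle[OF v(1)] \<open>d v + 2 + (if v = w then 1 else 0) > 0\<close> by simp
  qed
  define d' where "d' = d(w := -1)"
  have ic: "index_coeffs V \<phi> i \<in> {type9, type5, type4, type7}" if "i \<in> I" for i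
  proof -
    have i: "i < n" "i \<noteq> i2" using that unfolding I_def by auto
    have "index_coeffs V \<phi> i \<noteq> type2"
    proof
      assume "index_coeffs V \<phi> i = type2"
      then have "i \<in> {i. i < n \<and> index_coeffs V \<phi> i = type2}" using i by simp
      then show False using i2s i by simp
    qed
    moreover have "index_coeffs V \<phi> i \<in> {type9, type5, type2, type4, type7}"
      using rest i(1) unfolding n_def by blast
    ultimately show ?thesis by simp
  qed
  have s9: "{i\<in>I. index_coeffs V \<phi> i = type9} = {i. i < card V \<and> index_coeffs V \<phi> i = type9}"
  proof (rule set_eqI)
    fix i show "i \<in> {i\<in>I. index_coeffs V \<phi> i = type9} \<longleftrightarrow> i \<in> {i. i < card V \<and> index_coeffs V \<phi> i = type9}"
    proof (cases "i = i2")
      case True then show ?thesis using ti2 types_distinct(4) unfolding I_def by simp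
    next
      case False then show ?thesis unfolding I_def n_def by simp
    qed
  qed
  have s5: "{i\<in>I. index_coeffs V \<phi> i = type5} = {i. i < card V \<and> index_coeffs V \<phi> i = type5}"
  proof (rule set_eqI)
    fix i show "i \<in> {i\<in>I. index_coeffs V \<phi> i = type5} \<longleftrightarrow> i \<in> {i. i < card V \<and> index_coeffs V \<phi> i = type5}"
    proof (cases "i = i2")
      case True then show ?thesis using ti2 types_distinct(7) unfolding I_def by simp
    next
      case False then show ?thesis unfolding I_def n_def by simp
    qed
  qed
  have inv: "Inv V E d' \<phi> I w"
  proof -
    have g: "\<forall>v\<in>V. \<forall>w'\<in>V. v \<noteq> w' \<longrightarrow> QI I (\<phi> v) (\<phi> w') = (if E v w' then 1 else 0)"
      using gramI by blast
    have s: "\<forall>v\<in>V. QI I (\<phi> v) (\<phi> v) = d' v" using selfI dw unfolding d'_def by simp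
    have k: "\<forall>v\<in>V. (\<Sum>i\<in>I. \<phi> v i) = d' v + 2" using KI dw unfolding d'_def by simp
    have u1: "d' w = -1" unfolding d'_def by simp
    have u2: "\<forall>v\<in>V. v \<noteq> w \<longrightarrow> d' v \<noteq> -1" using minimal unfolding minimal_tree_def d'_def by simp
    have ty: "\<forall>i\<in>I. index_coeffs V \<phi> i \<in> {type9, type5, type4, type7}" using ic by blast
    show ?thesis unfolding Inv_def using tree finI cardI g s k wV u1 u2 ty s9 s5 t9 t5 by simp
  qed
  have "Ciso V E d' w" using main[OF inv] .
  then obtain m E' d2 g where cg: "cgen m E' d2 (g w)" and bij: "bij_betw g V {0..<m}"
    and ed: "\<forall>p\<in>V. \<forall>q\<in>V. E p q \<longleftrightarrow> E' (g p) (g q)" and dd: "\<forall>p\<in>V. d' p = d2 (g p)"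
    unfolding Ciso_def by blast
  have "\<forall>p\<in>V. d p = (d2(g w := -2)) (g p)"
  proof
    fix p assume p: "p \<in> V"
    show "d p = (d2(g w := -2)) (g p)"
    proof (cases "p = w")
      case True then show ?thesis using dw by simp
    next
      case False
      then have "g p \<noteq> g w" using bij p wV unfolding bij_betw_def inj_on_def by blast
      moreover have "d' p = d2 (g p)" using dd p by blast
      ultimately show ?thesis using False unfolding d'_def by simp
    qed
  qed
  then show ?thesis unfolding in_C_def using cg bij ed by blast
qed


end
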